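(* Let $\mathcal A$ be an abelian category and let $0\to F\to M\to C\to 0$ be a fully invariant short exact sequence in $\mathcal A$. (1) Assume that $M$ is (strongly) self-$F$-split. Then: (i) for every (fully invariant) direct summand $K$ of $M$, $F\cap K$ is a (fully invariant) direct summand of $M$; (ii) $M$ has SIP for (fully invariant) direct summands containing $F$. (2) Assume that $M$ is dual (strongly) self-$F$-split. Then: (i) for every (fully invariant) direct summand $K$ of $M$, $F+K$ is a (fully invariant) direct summand of $M$; (ii) $M$ has SSP for (fully invariant) direct summands contained in $F$.
   Context: Convention: each statement containing parenthetical words holds in two versions: one obtained by deleting all parenthetical words and one obtained by keeping all of them. Let $\mathcal A$ be an abelian category. A morphism $s:X\to Y$ is a section if $ts=1_X$ for some $t$, and a retraction if $st=1_Y$ for some $t$. A monomorphism $i:K\to M$ is fully invariant if for every morphism $h:M\to M$ there is $\alpha:K\to K$ with $hi=i\alpha$; an epimorphism $d:M\to C$ is fully coinvariant if for every $h:M\to M$ there is $\beta:C\to C$ with $dh=\beta d$. A subobject is fully invariant if its inclusion is. A short exact sequence $0\to F\xrightarrow{i}N\xrightarrow{d}C\to 0$ is fully invariant if $i$ is fully invariant. A (fully invariant) direct summand is a subobject whose inclusion is a (fully invariant) section. For an object $M$ and a fully invariant short exact sequence $0\to F\xrightarrow{i}N\xrightarrow{d}C\to 0$: $N$ is (strongly) $M$-$F$-split if for every morphism $g:M\to N$, $\ker(dg)$ is a (fully invariant) section; $N$ is dual (strongly) $M$-$F$-split if for every morphism $g:N\to M$, $\mathrm{coker}(gi)$ is a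 (fully coinvariant) retraction. Self-versions: take $M=N$. An object $M$ has the summand intersection property (SIP) for a class $\mathcal C$ of direct summands of $M$ if the intersection of any finite family of members of $\mathcal C$ belongs to $\mathcal C$; it has the summand sum property (SSP) for $\mathcal C$ if the sum of any finite family of members of $\mathcal C$ belongs to $\mathcal C$. *)

theory Defs
  imports Main
begin

text \<open>A category is given by a type of objects and a type of morphisms
(every element of the morphism type is a morphism) with domain, codomain,
composition (Comp C g f is g after f, meaningful when Cod f = Dom g) and identities.\<close>

record ('o, 'm) cat =
  Dom  :: "'m \<Rightarrow> 'o"
  Cod  :: "'m \<Rightarrow> 'o"
  Comp :: "'m \<Rightarrow> 'm \<Rightarrow> 'm"
  Id   :: "'o \<Rightarrow> 'm"

definition hom :: "('o,'m) cat \<Rightarrow> 'o \<Rightarrow> 'o \<Rightarrow> 'm \<Rightarrow> bool" where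
  "hom C a b f \<longleftrightarrow> Dom C f = a \<and> Cod C f = b"

definition category :: "('o,'m) cat \<Rightarrow> bool" where
  "category C \<longleftrightarrow>
     (\<forall>a. Dom C (Id C a) = a \<and> Cod C (Id C a) = a) \<and>
     (\<forall>f g. Cod C f = Dom C g \<longrightarrow>
        Dom C (Comp C g f) = Dom C f \<and> Cod C (Comp C g f) = Cod C g) \<and>
     (\<forall>f g h. Cod C f = Dom C g \<and> Cod C g = Dom C h \<longrightarrow>
        Comp C h (Comp C g f) = Comp C (Comp C h g) f) \<and>
     (\<forall>f. Comp C f (Id C (Dom C f)) = f \<and> Comp C (Id C (Cod C f)) f = f)"

definition zero_obj :: "('o,'m) cat \<Rightarrow> 'o \<Rightarrow> bool" where
  "zero_obj C z \<longleftrightarrow> (\<forall>a. (\<exists>!f. hom C z a f) \<and> (\<exists>!f. hom C a z f))"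

definition zero_mor :: "('o,'m) cat \<Rightarrow> 'm \<Rightarrow> bool" where
  "zero_mor C f \<longleftrightarrow> (\<exists>z g h. zero_obj C z \<and> hom C (Dom C f) z g \<and> hom C z (Cod C f) h
                        \<and> f = Comp C h g)"

definition mono :: "('o,'m) cat \<Rightarrow> 'm \<Rightarrow> bool" where
  "mono C f \<longleftrightarrow> (\<forall>g h. Cod C g = Dom C f \<and> Cod C h = Dom C f \<and> Dom C g = Dom C h
                        \<and> Comp C f g = Comp C f h \<longrightarrow> g = h)"

definition epi :: "('o,'m) cat \<Rightarrow> 'm \<Rightarrow> bool" where
  "epi C f \<longleftrightarrow> (\<forall>g h. Dom C g = Cod C f \<and> Dom C h = Cod C f \<and> Cod C g = Cod C h
                        \<and> Comp C g f = Comp C h f \<longrightarrow> g = h)"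

definition is_kernel :: "('o,'m) cat \<Rightarrow> 'm \<Rightarrow> 'm \<Rightarrow> bool" where
  "is_kernel C k f \<longleftrightarrow> Cod C k = Dom C f \<and> zero_mor C (Comp C f k) \<and>
     (\<forall>g. Cod C g = Dom C f \<and> zero_mor C (Comp C f g) \<longrightarrow>
        (\<exists>!u. hom C (Dom C g) (Dom C k) u \<and> Comp C k u = g))"

definition is_cokernel :: "('o,'m) cat \<Rightarrow> 'm \<Rightarrow> 'm \<Rightarrow> bool" where
  "is_cokernel C c f \<longleftrightarrow> Dom C c = Cod C f \<and> zero_mor C (Comp C c f) \<and>
     (\<forall>g. Dom C g = Cod C f \<and> zero_mor C (Comp C g f) \<longrightarrow>
        (\<exists>!u. hom C (Cod C c) (Cod C g) u \<and> Comp C u c = g))"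

definition has_products :: "('o,'m) cat \<Rightarrow> bool" where
  "has_products C \<longleftrightarrow> (\<forall>a b. \<exists>p p1 p2. hom C p a p1 \<and> hom C p b p2 \<and>
     (\<forall>x f g. hom C x a f \<and> hom C x b g \<longrightarrow>
        (\<exists>!u. hom C x p u \<and> Comp C p1 u = f \<and> Comp C p2 u = g)))"

definition has_coproducts :: "('o,'m) cat \<Rightarrow> bool" where
  "has_coproducts C \<longleftrightarrow> (\<forall>a b. \<exists>s s1 s2. hom C a s s1 \<and> hom C b s s2 \<and>
     (\<forall>x f g. hom C a x f \<and> hom C b x g \<longrightarrow>
        (\<exists>!u. hom C s x u \<and> Comp C u s1 = f \<and> Comp C u s2 = g)))"

definition abelian_cat :: "('o,'m) cat \<Rightarrow> bool" where
  "abelian_cat C \<longleftrightarrow> category C \<and> (\<exists>z. zero_obj C z) \<and> has_products C \<and> has_coproducts C \<and>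
     (\<forall>f. \<exists>k. is_kernel C k f) \<and> (\<forall>f. \<exists>c. is_cokernel C c f) \<and>
     (\<forall>f. mono C f \<longrightarrow> (\<exists>g. is_kernel C f g)) \<and>
     (\<forall>f. epi C f \<longrightarrow> (\<exists>g. is_cokernel C f g))"

definition short_exact :: "('o,'m) cat \<Rightarrow> 'm \<Rightarrow> 'm \<Rightarrow> bool" where
  "short_exact C i d \<longleftrightarrow> Cod C i = Dom C d \<and> mono C i \<and> epi C d \<and>
     is_kernel C i d \<and> is_cokernel C d i"

definition is_section :: "('o,'m) cat \<Rightarrow> 'm \<Rightarrow> bool" where
  "is_section C s \<longleftrightarrow> (\<exists>t. hom C (Cod C s) (Dom C s) t \<and> Comp C t s = Id C (Dom C s))"

definition is_retraction :: "('o,'m) cat \<Rightarrow> 'm \<Rightarrow> bool" where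
  "is_retraction C s \<longleftrightarrow> (\<exists>t. hom C (Cod C s) (Dom C s) t \<and> Comp C s t = Id C (Cod C s))"

definition fully_invariant :: "('o,'m) cat \<Rightarrow> 'm \<Rightarrow> bool" where
  "fully_invariant C i \<longleftrightarrow> mono C i \<and>
     (\<forall>h. hom C (Cod C i) (Cod C i) h \<longrightarrow>
        (\<exists>\<alpha>. hom C (Dom C i) (Dom C i) \<alpha> \<and> Comp C h i = Comp C i \<alpha>))"

definition fully_coinvariant :: "('o,'m) cat \<Rightarrow> 'm \<Rightarrow> bool" where
  "fully_coinvariant C d \<longleftrightarrow> epi C d \<and>
     (\<forall>h. hom C (Dom C d) (Dom C d) h \<longrightarrow>
        (\<exists>\<beta>. hom C (Cod C d) (Cod C d) \<beta> \<and> Comp C d h = Comp C \<beta> d))"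

text \<open>The Boolean flag b encodes the parenthetical convention:
b = False deletes the parenthetical words, b = True keeps them
("strongly", "fully invariant", "fully coinvariant").\<close>

definition self_F_split :: "bool \<Rightarrow> ('o,'m) cat \<Rightarrow> 'm \<Rightarrow> 'm \<Rightarrow> bool" where
  "self_F_split b C i d \<longleftrightarrow>
     (\<forall>g k. hom C (Cod C i) (Cod C i) g \<and> is_kernel C k (Comp C d g) \<longrightarrow>
        is_section C k \<and> (b \<longrightarrow> fully_invariant C k))"

definition dual_self_F_split :: "bool \<Rightarrow> ('o,'m) cat \<Rightarrow> 'm \<Rightarrow> 'm \<Rightarrow> bool" where
  "dual_self_F_split b C i d \<longleftrightarrow>
     (\<forall>g c. hom C (Cod C i) (Cod C i) g \<and> is_cokernel C c (Comp C g i) \<longrightarrow>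
        is_retraction C c \<and> (b \<longrightarrow> fully_coinvariant C c))"

text \<open>Subobjects of M are represented by monomorphisms with codomain M.\<close>

definition factors_through :: "('o,'m) cat \<Rightarrow> 'm \<Rightarrow> 'm \<Rightarrow> bool" where
  "factors_through C a k \<longleftrightarrow> Cod C a = Cod C k \<and>
     (\<exists>u. hom C (Dom C a) (Dom C k) u \<and> Comp C k u = a)"

definition direct_summand :: "bool \<Rightarrow> ('o,'m) cat \<Rightarrow> 'o \<Rightarrow> 'm \<Rightarrow> bool" where
  "direct_summand b C M k \<longleftrightarrow> Cod C k = M \<and> is_section C k \<and> (b \<longrightarrow> fully_invariant C k)"

definition is_intersection :: "('o,'m) cat \<Rightarrow> 'o \<Rightarrow> 'i set \<Rightarrow> ('i \<Rightarrow> 'm) \<Rightarrow> 'm \<Rightarrow> bool" where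
  "is_intersection C M I ks j \<longleftrightarrow> mono C j \<and> Cod C j = M \<and>
     (\<forall>x\<in>I. factors_through C j (ks x)) \<and>
     (\<forall>t. mono C t \<and> Cod C t = M \<and> (\<forall>x\<in>I. factors_through C t (ks x)) \<longrightarrow>
        factors_through C t j)"

definition is_sum :: "('o,'m) cat \<Rightarrow> 'o \<Rightarrow> 'i set \<Rightarrow> ('i \<Rightarrow> 'm) \<Rightarrow> 'm \<Rightarrow> bool" where
  "is_sum C M I ks s \<longleftrightarrow> mono C s \<and> Cod C s = M \<and>
     (\<forall>x\<in>I. factors_through C (ks x) s) \<and>
     (\<forall>t. mono C t \<and> Cod C t = M \<and> (\<forall>x\<in>I. factors_through C (ks x) t) \<longrightarrow>
        factors_through C s t)"

end

theory Submission imports Defs begin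

definition opc :: "('o,'m) cat \<Rightarrow> ('o,'m) cat" where
  "opc C = \<lparr>Dom = Cod C, Cod = Dom C, Comp = (\<lambda>g f. Comp C f g), Id = Id C\<rparr>"

lemma opc_simps[simp]: "Dom (opc C) = Cod C" "Cod (opc C) = Dom C"
  "Comp (opc C) g f = Comp C f g" "Id (opc C) = Id C"
  by (simp_all add: opc_def)

lemma opc_hom[simp]: "hom (opc C) a b f = hom C b a f"
  by (auto simp: hom_def)

lemma opc_category: "category C \<Longrightarrow> category (opc C)"
  unfolding category_def by auto

lemma opc_hom_fun[simp]: "hom (opc C) a b = hom C b a"
  by (rule ext) simp

lemma opc_zero_obj[simp]: "zero_obj (opc C) z = zero_obj C z"
  unfolding zero_obj_def by (simp only: opc_hom_fun) blast

lemma opc_zero_mor[simp]: "zero_mor (opc C) f = zero_mor C f"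
  unfolding zero_mor_def by auto

lemma opc_mono[simp]: "mono (opc C) f = epi C f"
  unfolding mono_def epi_def by auto

lemma opc_epi[simp]: "epi (opc C) f = mono C f"
  unfolding mono_def epi_def by auto

lemma opc_kernel[simp]: "is_kernel (opc C) k f = is_cokernel C k f"
  unfolding is_kernel_def is_cokernel_def by auto

lemma opc_cokernel[simp]: "is_cokernel (opc C) k f = is_kernel C k f"
  unfolding is_kernel_def is_cokernel_def by auto

lemma opc_products[simp]: "has_products (opc C) = has_coproducts C"
  unfolding has_products_def has_coproducts_def by simp

lemma opc_coproducts[simp]: "has_coproducts (opc C) = has_products C"
  unfolding has_products_def has_coproducts_def by simp

lemma opc_kernel_fun[simp]: "is_kernel (opc C) k = is_cokernel C k"
  by (rule ext) simp

lemma opc_cokernel_fun[simp]: "is_cokernel (opc C) k = is_kernel C k"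
  by (rule ext) simp

lemma opc_abelian: "abelian_cat C \<Longrightarrow> abelian_cat (opc C)"
  unfolding abelian_cat_def using opc_category by auto

lemma opc_section[simp]: "is_section (opc C) s = is_retraction C s"
  unfolding is_section_def is_retraction_def by auto

locale ab =
  fixes C :: "('o,'m) cat"
  assumes abel: "abelian_cat C"
begin

abbreviation dm where "dm \<equiv> Dom C"
abbreviation cdm where "cdm \<equiv> Cod C"
abbreviation cp (infixr "\<cdot>" 55) where "g \<cdot> f \<equiv> Comp C g f"
abbreviation ide where "ide \<equiv> Id C"
abbreviation zm where "zm \<equiv> zero_mor C"

lemma cat: "category C" using abel unfolding abelian_cat_def by auto

lemma dom_id[simp]: "dm (ide a) = a" using cat unfolding category_def by auto
lemma cod_id[simp]: "cdm (ide a) = a" using cat unfolding category_def by auto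
lemma dom_comp[simp]: "cdm f = dm g \<Longrightarrow> dm (g \<cdot> f) = dm f"
  using cat unfolding category_def by auto
lemma cod_comp[simp]: "cdm f = dm g \<Longrightarrow> cdm (g \<cdot> f) = cdm g"
  using cat unfolding category_def by auto
lemma assoc: "cdm f = dm g \<Longrightarrow> cdm g = dm h \<Longrightarrow> h \<cdot> (g \<cdot> f) = (h \<cdot> g) \<cdot> f"
  using cat unfolding category_def by auto
lemma assoc': "cdm f = dm g \<Longrightarrow> cdm g = dm h \<Longrightarrow> (h \<cdot> g) \<cdot> f = h \<cdot> (g \<cdot> f)"
  using cat unfolding category_def by auto
lemma comp_id[simp]: "dm f = a \<Longrightarrow> f \<cdot> ide a = f"
  using cat unfolding category_def by auto
lemma id_comp[simp]: "cdm f = a \<Longrightarrow> ide a \<cdot> f = f"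
  using cat unfolding category_def by auto

lemma ex_zero_obj: "\<exists>z. zero_obj C z" using abel unfolding abelian_cat_def by auto

lemma zero_obj_in: "zero_obj C z \<Longrightarrow> dm a = dm b \<Longrightarrow> cdm a = z \<Longrightarrow> cdm b = z \<Longrightarrow> a = b"
  unfolding zero_obj_def hom_def by metis
lemma zero_obj_out: "zero_obj C z \<Longrightarrow> cdm a = cdm b \<Longrightarrow> dm a = z \<Longrightarrow> dm b = z \<Longrightarrow> a = b"
  unfolding zero_obj_def hom_def by metis
lemma zero_obj_ex_in: "zero_obj C z \<Longrightarrow> \<exists>g. dm g = a \<and> cdm g = z"
  unfolding zero_obj_def hom_def by metis
lemma zero_obj_ex_out: "zero_obj C z \<Longrightarrow> \<exists>g. dm g = z \<and> cdm g = a"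
  unfolding zero_obj_def hom_def by metis

lemma zm_ex: "\<exists>f. dm f = a \<and> cdm f = b \<and> zm f"
proof -
  obtain z where z: "zero_obj C z" using ex_zero_obj by auto
  obtain g where g: "dm g = a" "cdm g = z" using zero_obj_ex_in[OF z] by auto
  obtain h where h: "dm h = z" "cdm h = b" using zero_obj_ex_out[OF z] by auto
  have "zm (h \<cdot> g)" unfolding zero_mor_def hom_def using z g h by auto
  thus ?thesis by (intro exI[of _ "h \<cdot> g"]) (use g h in simp)
qed

lemma zmE: assumes "zm f"
  obtains z g h where "zero_obj C z" "dm g = dm f" "cdm g = z" "dm h = z" "cdm h = cdm f" "f = h \<cdot> g"
  using assms unfolding zero_mor_def hom_def by auto

lemma zm_uniq: assumes "zm f" "zm g" "dm f = dm g" "cdm f = cdm g" shows "f = g"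
proof -
  obtain z1 g1 h1 where 1: "zero_obj C z1" "dm g1 = dm f" "cdm g1 = z1" "dm h1 = z1" "cdm h1 = cdm f" "f = h1 \<cdot> g1"
    using assms(1) by (rule zmE)
  obtain z2 g2 h2 where 2: "zero_obj C z2" "dm g2 = dm g" "cdm g2 = z2" "dm h2 = z2" "cdm h2 = cdm g" "g = h2 \<cdot> g2"
    using assms(2) by (rule zmE)
  obtain \<phi> where p: "dm \<phi> = z1" "cdm \<phi> = z2" using zero_obj_ex_out[OF 1(1)] by auto
  have a: "\<phi> \<cdot> g1 = g2" by (rule zero_obj_in[OF 2(1)]) (use 1 2 p assms in auto)
  have b: "h2 \<cdot> \<phi> = h1" by (rule zero_obj_out[OF 1(1)]) (use 1 2 p assms in auto)
  have "f = (h2 \<cdot> \<phi>) \<cdot> g1" using b 1 by simp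
  also have "\<dots> = h2 \<cdot> (\<phi> \<cdot> g1)" using 1 2 p by (simp add: assoc')
  also have "\<dots> = g" using a 2 by simp
  finally show ?thesis .
qed

lemma zm_compL: assumes "zm f" "cdm f = dm g" shows "zm (g \<cdot> f)"
proof -
  obtain z g0 h where 1: "zero_obj C z" "dm g0 = dm f" "cdm g0 = z" "dm h = z" "cdm h = cdm f" "f = h \<cdot> g0"
    using assms(1) by (rule zmE)
  have e: "g \<cdot> f = (g \<cdot> h) \<cdot> g0" using 1 assms by (simp add: assoc')
  show ?thesis unfolding zero_mor_def hom_def
    by (rule exI[of _ z], rule exI[of _ g0], rule exI[of _ "g \<cdot> h"]) (use 1 assms e in auto)
qed

lemma zm_compR: assumes "zm f" "cdm g = dm f" shows "zm (f \<cdot> g)"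
proof -
  obtain z g0 h where 1: "zero_obj C z" "dm g0 = dm f" "cdm g0 = z" "dm h = z" "cdm h = cdm f" "f = h \<cdot> g0"
    using assms(1) by (rule zmE)
  have e: "f \<cdot> g = h \<cdot> (g0 \<cdot> g)" using 1 assms by (simp add: assoc')
  show ?thesis unfolding zero_mor_def hom_def
    by (rule exI[of _ z], rule exI[of _ "g0 \<cdot> g"], rule exI[of _ h]) (use 1 assms e in auto)
qed

lemma mono_cancel: "mono C m \<Longrightarrow> m \<cdot> a = m \<cdot> b \<Longrightarrow> cdm a = dm m \<Longrightarrow> cdm b = dm m \<Longrightarrow> dm a = dm b \<Longrightarrow> a = b"
  unfolding mono_def by blast
lemma epi_cancel: "epi C e \<Longrightarrow> a \<cdot> e = b \<cdot> e \<Longrightarrow> dm a = cdm e \<Longrightarrow> dm b = cdm e \<Longrightarrow> cdm a = cdm b \<Longrightarrow> a = b"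
  unfolding epi_def by blast

lemma monoI: "(\<And>a b. cdm a = dm m \<Longrightarrow> cdm b = dm m \<Longrightarrow> dm a = dm b \<Longrightarrow> m \<cdot> a = m \<cdot> b \<Longrightarrow> a = b) \<Longrightarrow> mono C m"
  unfolding mono_def by blast
lemma epiI: "(\<And>a b. dm a = cdm m \<Longrightarrow> dm b = cdm m \<Longrightarrow> cdm a = cdm b \<Longrightarrow> a \<cdot> m = b \<cdot> m \<Longrightarrow> a = b) \<Longrightarrow> epi C m"
  unfolding epi_def by blast

lemma mono_comp: assumes "mono C f" "mono C g" "cdm g = dm f" shows "mono C (f \<cdot> g)"
proof (rule monoI)
  fix a b assume h1: "cdm a = dm (f \<cdot> g)" and h2: "cdm b = dm (f \<cdot> g)" and h3: "dm a = dm b"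
    and h4: "(f \<cdot> g) \<cdot> a = (f \<cdot> g) \<cdot> b"
  have t: "cdm a = dm g" "cdm b = dm g" using h1 h2 assms by auto
  have "f \<cdot> (g \<cdot> a) = f \<cdot> (g \<cdot> b)" using h4 t assms by (simp add: assoc')
  hence "g \<cdot> a = g \<cdot> b" using mono_cancel[OF assms(1)] t h3 assms by auto
  thus "a = b" using mono_cancel[OF assms(2)] t h3 assms by auto
qed

lemma sect_mono: assumes "r \<cdot> s = ide (dm s)" "cdm s = dm r" shows "mono C s"
proof (rule monoI)
  fix a b assume h1: "cdm a = dm s" and h2: "cdm b = dm s" and h3: "dm a = dm b"
    and h4: "s \<cdot> a = s \<cdot> b"
  have "a = ide (dm s) \<cdot> a" using h1 by simp
  also have "\<dots> = (r \<cdot> s) \<cdot> a" using assms by simp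
  also have "\<dots> = r \<cdot> (s \<cdot> a)" by (rule assoc') (use assms h1 in auto)
  also have "\<dots> = r \<cdot> (s \<cdot> b)" using h4 by simp
  also have "\<dots> = (r \<cdot> s) \<cdot> b" by (rule assoc) (use assms h2 in auto)
  also have "\<dots> = b" using assms h2 by simp
  finally show "a = b" .
qed

lemma retr_epi: assumes "s \<cdot> r = ide (cdm s)" "cdm r = dm s" shows "epi C s"
proof (rule epiI)
  fix a b assume h1: "dm a = cdm s" and h2: "dm b = cdm s" and h3: "cdm a = cdm b"
    and h4: "a \<cdot> s = b \<cdot> s"
  have "a = a \<cdot> ide (cdm s)" using h1 by simp
  also have "\<dots> = a \<cdot> (s \<cdot> r)" using assms by simp
  also have "\<dots> = (a \<cdot> s) \<cdot> r" by (rule assoc) (use assms h1 in auto)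
  also have "\<dots> = (b \<cdot> s) \<cdot> r" using h4 by simp
  also have "\<dots> = b \<cdot> (s \<cdot> r)" by (rule assoc') (use assms h2 in auto)
  also have "\<dots> = b" using assms h2 by simp
  finally show "a = b" .
qed

lemma ex_ker: "\<exists>k. is_kernel C k f" using abel unfolding abelian_cat_def by auto
lemma ex_coker: "\<exists>k. is_cokernel C k f" using abel unfolding abelian_cat_def by auto
lemma mono_ker: "mono C f \<Longrightarrow> \<exists>g. is_kernel C f g" using abel unfolding abelian_cat_def by auto
lemma epi_coker: "epi C f \<Longrightarrow> \<exists>g. is_cokernel C f g" using abel unfolding abelian_cat_def by auto

lemma ker_cod: "is_kernel C k f \<Longrightarrow> cdm k = dm f" unfolding is_kernel_def by auto
lemma ker_zero: "is_kernel C k f \<Longrightarrow> zm (f \<cdot> k)" unfolding is_kernel_def by auto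
lemma ker_fac: "is_kernel C k f \<Longrightarrow> cdm g = dm f \<Longrightarrow> zm (f \<cdot> g) \<Longrightarrow>
   \<exists>u. dm u = dm g \<and> cdm u = dm k \<and> k \<cdot> u = g"
  unfolding is_kernel_def hom_def by metis
lemma coker_dom: "is_cokernel C k f \<Longrightarrow> dm k = cdm f" unfolding is_cokernel_def by auto
lemma coker_zero: "is_cokernel C k f \<Longrightarrow> zm (k \<cdot> f)" unfolding is_cokernel_def by auto
lemma coker_fac: "is_cokernel C k f \<Longrightarrow> dm g = cdm f \<Longrightarrow> zm (g \<cdot> f) \<Longrightarrow>
   \<exists>u. dm u = cdm k \<and> cdm u = cdm g \<and> u \<cdot> k = g"
  unfolding is_cokernel_def hom_def by metis

lemma ker_facE: assumes "is_kernel C k f" "cdm g = dm f" "zm (f \<cdot> g)"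
  obtains u where "dm u = dm g" "cdm u = dm k" "k \<cdot> u = g"
proof -
  have "\<exists>u. dm u = dm g \<and> cdm u = dm k \<and> k \<cdot> u = g" by (rule ker_fac[OF assms])
  thus ?thesis by (elim exE conjE) (rule that)
qed
lemma coker_facE: assumes "is_cokernel C k f" "dm g = cdm f" "zm (g \<cdot> f)"
  obtains u where "dm u = cdm k" "cdm u = cdm g" "u \<cdot> k = g"
proof -
  have "\<exists>u. dm u = cdm k \<and> cdm u = cdm g \<and> u \<cdot> k = g" by (rule coker_fac[OF assms])
  thus ?thesis by (elim exE conjE) (rule that)
qed

lemma ker_mono: assumes "is_kernel C k f" shows "mono C k"
  unfolding mono_def
proof (intro allI impI)
  fix a b assume h: "cdm a = dm k \<and> cdm b = dm k \<and> dm a = dm b \<and> k \<cdot> a = k \<cdot> b"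
  have c: "cdm k = dm f" using ker_cod[OF assms] .
  have z0: "zm ((f \<cdot> k) \<cdot> a)" using zm_compR[OF ker_zero[OF assms], of a] h c by simp
  have "cdm a = dm k" using h by simp
  hence z: "zm (f \<cdot> (k \<cdot> a))" using z0 c by (simp add: assoc')
  have all: "\<forall>g. cdm g = dm f \<and> zm (f \<cdot> g) \<longrightarrow> (\<exists>!u. hom C (dm g) (dm k) u \<and> k \<cdot> u = g)"
    using assms unfolding is_kernel_def by blast
  have t: "cdm (k \<cdot> a) = dm f" using h c by simp
  have "\<exists>!u. hom C (dm (k \<cdot> a)) (dm k) u \<and> k \<cdot> u = k \<cdot> a"
    using all[rule_format, OF conjI[OF t z]] .
  moreover have "hom C (dm (k \<cdot> a)) (dm k) a" "hom C (dm (k \<cdot> a)) (dm k) b"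
    using h c unfolding hom_def by auto
  ultimately show "a = b" using h by metis
qed

lemma coker_epi: assumes "is_cokernel C k f" shows "epi C k"
  unfolding epi_def
proof (intro allI impI)
  fix a b assume h: "dm a = cdm k \<and> dm b = cdm k \<and> cdm a = cdm b \<and> a \<cdot> k = b \<cdot> k"
  have c: "dm k = cdm f" using coker_dom[OF assms] .
  have z0: "zm (a \<cdot> (k \<cdot> f))" using zm_compL[OF coker_zero[OF assms], of a] h c by simp
  have "dm a = cdm k" using h by simp
  hence z: "zm ((a \<cdot> k) \<cdot> f)" using z0 c by (simp add: assoc')
  have all: "\<forall>g. dm g = cdm f \<and> zm (g \<cdot> f) \<longrightarrow> (\<exists>!u. hom C (cdm k) (cdm g) u \<and> u \<cdot> k = g)"
    using assms unfolding is_cokernel_def by blast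
  have t: "dm (a \<cdot> k) = cdm f" using h c by simp
  have "\<exists>!u. hom C (cdm k) (cdm (a \<cdot> k)) u \<and> u \<cdot> k = a \<cdot> k"
    using all[rule_format, OF conjI[OF t z]] .
  moreover have "hom C (cdm k) (cdm (a \<cdot> k)) a" "hom C (cdm k) (cdm (a \<cdot> k)) b"
    using h c unfolding hom_def by auto
  ultimately show "a = b" using h by metis
qed

lemma zm_epi: "epi C e \<Longrightarrow> zm (x \<cdot> e) \<Longrightarrow> dm x = cdm e \<Longrightarrow> zm x"
proof -
  assume a: "epi C e" "zm (x \<cdot> e)" "dm x = cdm e"
  obtain z where z: "dm z = dm x" "cdm z = cdm x" "zm z" using zm_ex by blast
  have "x \<cdot> e = z \<cdot> e" by (rule zm_uniq) (use a z zm_compR in auto)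
  hence "x = z" using epi_cancel[OF a(1)] a z by auto
  thus ?thesis using z by simp
qed

lemma zm_mono: "mono C m \<Longrightarrow> zm (m \<cdot> x) \<Longrightarrow> cdm x = dm m \<Longrightarrow> zm x"
proof -
  assume a: "mono C m" "zm (m \<cdot> x)" "cdm x = dm m"
  obtain z where z: "dm z = dm x" "cdm z = cdm x" "zm z" using zm_ex by blast
  have "m \<cdot> x = m \<cdot> z" by (rule zm_uniq) (use a z zm_compL in auto)
  hence "x = z" using mono_cancel[OF a(1)] a z by auto
  thus ?thesis using z by simp
qed

lemma mono_is_ker_coker: assumes "mono C m" "is_cokernel C c m" shows "is_kernel C m c"
proof -
  obtain g where g: "is_kernel C m g" using mono_ker[OF assms(1)] by auto
  have dc: "dm c = cdm m" using coker_dom[OF assms(2)] .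
  have dg: "dm g = cdm m" using ker_cod[OF g] by simp
  obtain w where w: "dm w = cdm c" "cdm w = cdm g" "w \<cdot> c = g"
    using coker_fac[OF assms(2) dg ker_zero[OF g]] by auto
  show ?thesis unfolding is_kernel_def hom_def
  proof (intro conjI allI impI)
    show "cdm m = dm c" using dc by simp
    show "zm (c \<cdot> m)" using coker_zero[OF assms(2)] .
    fix h assume h: "cdm h = dm c \<and> zm (c \<cdot> h)"
    have "zm (w \<cdot> (c \<cdot> h))" using zm_compL[of "c \<cdot> h" w] h w dc by simp
    hence "zm (g \<cdot> h)" using h w dc by (simp add: assoc'[symmetric])
    then obtain u where u: "dm u = dm h" "cdm u = dm m" "m \<cdot> u = h"
      using ker_fac[OF g] h dc dg by auto
    show "\<exists>!u. (dm u = dm h \<and> cdm u = dm m) \<and> m \<cdot> u = h"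
    proof (rule ex1I[of _ u])
      show "(dm u = dm h \<and> cdm u = dm m) \<and> m \<cdot> u = h" using u by auto
      fix v assume "(dm v = dm h \<and> cdm v = dm m) \<and> m \<cdot> v = h"
      thus "v = u" using mono_cancel[OF assms(1)] u by auto
    qed
  qed
qed

lemma mono_epi_iso: assumes "mono C f" "epi C f"
  shows "\<exists>g. dm g = cdm f \<and> cdm g = dm f \<and> g \<cdot> f = ide (dm f) \<and> f \<cdot> g = ide (cdm f)"
proof -
  obtain h where h: "is_kernel C f h" using mono_ker[OF assms(1)] by auto
  have c: "cdm f = dm h" using ker_cod[OF h] .
  obtain z where z: "dm z = dm h" "cdm z = cdm h" "zm z" using zm_ex by blast
  have "h \<cdot> f = z \<cdot> f" by (rule zm_uniq) (use ker_zero[OF h] zm_compR z c in auto)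
  hence hz: "h = z" using epi_cancel[OF assms(2)] c z by auto
  have "zm (h \<cdot> ide (cdm f))" using hz z c by simp
  then obtain g where g: "dm g = cdm f" "cdm g = dm f" "f \<cdot> g = ide (cdm f)"
    using ker_fac[OF h, of "ide (cdm f)"] c by auto
  have "f \<cdot> (g \<cdot> f) = f \<cdot> ide (dm f)" using g by (simp flip: assoc')
  hence "g \<cdot> f = ide (dm f)" using mono_cancel[OF assms(1)] g by auto
  thus ?thesis using g by auto
qed


lemma ex1_uniq: "\<exists>!x. P x \<Longrightarrow> P a \<Longrightarrow> P b \<Longrightarrow> a = b" by blast

lemma assoc_eq: "x \<cdot> y = z \<Longrightarrow> cdm w = dm y \<Longrightarrow> cdm y = dm x \<Longrightarrow> x \<cdot> (y \<cdot> w) = z \<cdot> w"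
proof -
  assume a: "x \<cdot> y = z" "cdm w = dm y" "cdm y = dm x"
  have "x \<cdot> (y \<cdot> w) = (x \<cdot> y) \<cdot> w" by (rule assoc) (use a in auto)
  thus ?thesis using a by simp
qed

lemma product:
  obtains P p1 p2 where "dm p1 = P" "cdm p1 = a" "dm p2 = P" "cdm p2 = b"
  "\<And>f g. dm f = dm g \<Longrightarrow> cdm f = a \<Longrightarrow> cdm g = b \<Longrightarrow>
      \<exists>u. dm u = dm f \<and> cdm u = P \<and> p1 \<cdot> u = f \<and> p2 \<cdot> u = g"
  "\<And>u v. dm u = dm v \<Longrightarrow> cdm u = P \<Longrightarrow> cdm v = P \<Longrightarrow> p1 \<cdot> u = p1 \<cdot> v \<Longrightarrow> p2 \<cdot> u = p2 \<cdot> v \<Longrightarrow> u = v"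
proof -
  have "has_products C" using abel unfolding abelian_cat_def by auto
  note hp = this[unfolded has_products_def, rule_format, of a b]
  from hp obtain P p1 p2 where h0: "hom C P a p1 \<and> hom C P b p2 \<and>
    (\<forall>x f g. hom C x a f \<and> hom C x b g \<longrightarrow> (\<exists>!u. hom C x P u \<and> p1 \<cdot> u = f \<and> p2 \<cdot> u = g))"
    by (elim exE) (rule that)
  have h: "hom C P a p1" "hom C P b p2"
    "\<forall>x f g. hom C x a f \<and> hom C x b g \<longrightarrow> (\<exists>!u. hom C x P u \<and> p1 \<cdot> u = f \<and> p2 \<cdot> u = g)"
    using h0 by (rule conjunct1, rule conjunct1[OF conjunct2], rule conjunct2[OF conjunct2])
  show ?thesis
  proof (rule that[of p1 P p2])
    show "dm p1 = P" "cdm p1 = a" "dm p2 = P" "cdm p2 = b" using h unfolding hom_def by auto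
    fix f g assume "dm f = dm g" "cdm f = a" "cdm g = b"
    then have "hom C (dm f) a f \<and> hom C (dm f) b g" unfolding hom_def by auto
    then have "\<exists>!u. hom C (dm f) P u \<and> p1 \<cdot> u = f \<and> p2 \<cdot> u = g"
      by (rule h(3)[rule_format])
    then obtain u where "hom C (dm f) P u" "p1 \<cdot> u = f" "p2 \<cdot> u = g" by (elim ex1E conjE) (rule that)
    then show "\<exists>u. dm u = dm f \<and> cdm u = P \<and> p1 \<cdot> u = f \<and> p2 \<cdot> u = g"
      unfolding hom_def by blast
  next
    fix u v assume a: "dm u = dm v" "cdm u = P" "cdm v = P" "p1 \<cdot> u = p1 \<cdot> v" "p2 \<cdot> u = p2 \<cdot> v"
    have t: "dm p1 = P" "cdm p1 = a" "dm p2 = P" "cdm p2 = b" using h unfolding hom_def by auto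
    have "hom C (dm u) a (p1 \<cdot> u) \<and> hom C (dm u) b (p2 \<cdot> u)" using a t unfolding hom_def by auto
    then have e1: "\<exists>!w. hom C (dm u) P w \<and> p1 \<cdot> w = p1 \<cdot> u \<and> p2 \<cdot> w = p2 \<cdot> u"
      by (rule h(3)[rule_format])
    have hu: "hom C (dm u) P u" "hom C (dm u) P v" using a unfolding hom_def by auto
    show "u = v" by (rule ex1_uniq[OF e1]) (use hu a in simp_all)
  qed
qed

lemma equalizer: assumes "dm u = dm v" "cdm u = cdm v"
  obtains e where "cdm e = dm u" "mono C e" "u \<cdot> e = v \<cdot> e"
    "\<And>a. cdm a = dm u \<Longrightarrow> u \<cdot> a = v \<cdot> a \<Longrightarrow> \<exists>w. dm w = dm a \<and> cdm w = dm e \<and> e \<cdot> w = a"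
proof -
  define B where "B = cdm u"
  obtain p1 P p2 where p: "dm p1 = P" "cdm p1 = B" "dm p2 = P" "cdm p2 = B"
    and pair: "\<And>f g. dm f = dm g \<Longrightarrow> cdm f = B \<Longrightarrow> cdm g = B \<Longrightarrow>
      \<exists>u. dm u = dm f \<and> cdm u = P \<and> p1 \<cdot> u = f \<and> p2 \<cdot> u = g"
    and uq: "\<And>u v. dm u = dm v \<Longrightarrow> cdm u = P \<Longrightarrow> cdm v = P \<Longrightarrow> p1 \<cdot> u = p1 \<cdot> v \<Longrightarrow> p2 \<cdot> u = p2 \<cdot> v \<Longrightarrow> u = v"
    by (rule product[where a=B and b=B]) blast
  have "\<exists>w. dm w = dm (ide B) \<and> cdm w = P \<and> p1 \<cdot> w = ide B \<and> p2 \<cdot> w = ide B"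
    by (rule pair) simp_all
  then obtain D where D: "dm D = B" "cdm D = P" "p1 \<cdot> D = ide B" "p2 \<cdot> D = ide B"
    by (elim exE conjE) (rule that, simp_all)
  have "mono C D" by (rule sect_mono[of p1]) (use D p in auto)
  then obtain \<phi> where ph: "is_kernel C D \<phi>" using mono_ker by auto
  have dph: "dm \<phi> = P" using ker_cod[OF ph] D by simp
  have "\<exists>w. dm w = dm u \<and> cdm w = P \<and> p1 \<cdot> w = u \<and> p2 \<cdot> w = v"
    by (rule pair) (use assms B_def in auto)
  then obtain pr where pr: "dm pr = dm u" "cdm pr = P" "p1 \<cdot> pr = u" "p2 \<cdot> pr = v"
    by (elim exE conjE) (rule that)
  obtain e where e: "is_kernel C e (\<phi> \<cdot> pr)" using ex_ker by auto
  have ce: "cdm e = dm u" using ker_cod[OF e] pr dph by simp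
  show ?thesis
  proof (rule that[of e])
    show "cdm e = dm u" by (rule ce)
    show "mono C e" by (rule ker_mono[OF e])
    have "zm ((\<phi> \<cdot> pr) \<cdot> e)" by (rule ker_zero[OF e])
    hence z1: "zm (\<phi> \<cdot> (pr \<cdot> e))" using pr dph ce by (simp add: assoc')
    have c1: "cdm (pr \<cdot> e) = dm \<phi>" using pr dph ce by simp
    obtain w where w: "dm w = dm (pr \<cdot> e)" "cdm w = dm D" "D \<cdot> w = pr \<cdot> e"
      by (rule ker_facE[OF ph c1 z1])
    have "u \<cdot> e = (p1 \<cdot> pr) \<cdot> e" using pr by simp
    also have "\<dots> = p1 \<cdot> (pr \<cdot> e)" by (rule assoc') (use pr ce p in auto)
    also have "\<dots> = p1 \<cdot> (D \<cdot> w)" using w by simp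
    also have "\<dots> = ide B \<cdot> w" by (rule assoc_eq) (use D p w in auto)
    also have "\<dots> = w" using w D by simp
    finally have 1: "u \<cdot> e = w" .
    have "v \<cdot> e = (p2 \<cdot> pr) \<cdot> e" using pr by simp
    also have "\<dots> = p2 \<cdot> (pr \<cdot> e)" by (rule assoc') (use pr ce p in auto)
    also have "\<dots> = p2 \<cdot> (D \<cdot> w)" using w by simp
    also have "\<dots> = ide B \<cdot> w" by (rule assoc_eq) (use D p w in auto)
    also have "\<dots> = w" using w D by simp
    finally show "u \<cdot> e = v \<cdot> e" using 1 by simp
  next
    fix a assume a1: "cdm a = dm u" and a2: "u \<cdot> a = v \<cdot> a"
    have cua: "cdm (u \<cdot> a) = B" using a1 unfolding B_def by simp
    have dua: "dm (u \<cdot> a) = dm a" using a1 by simp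
    have pa: "cdm (pr \<cdot> a) = P" "dm (pr \<cdot> a) = dm a" using a1 pr by simp_all
    have Da: "cdm (D \<cdot> (u \<cdot> a)) = P" "dm (D \<cdot> (u \<cdot> a)) = dm a" using cua dua D by simp_all
    have "pr \<cdot> a = D \<cdot> (u \<cdot> a)"
    proof (rule uq)
      show "dm (pr \<cdot> a) = dm (D \<cdot> (u \<cdot> a))" using pa Da by simp
      show "cdm (pr \<cdot> a) = P" "cdm (D \<cdot> (u \<cdot> a)) = P" using pa Da by simp_all
      have "p1 \<cdot> (pr \<cdot> a) = u \<cdot> a" by (rule assoc_eq) (use a1 pr p in simp_all)
      moreover have "p1 \<cdot> (D \<cdot> (u \<cdot> a)) = ide B \<cdot> (u \<cdot> a)" by (rule assoc_eq) (use D p cua in simp_all)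
      ultimately show "p1 \<cdot> (pr \<cdot> a) = p1 \<cdot> (D \<cdot> (u \<cdot> a))" using cua by simp
      have "p2 \<cdot> (pr \<cdot> a) = v \<cdot> a" by (rule assoc_eq) (use a1 pr p in simp_all)
      moreover have "p2 \<cdot> (D \<cdot> (u \<cdot> a)) = ide B \<cdot> (u \<cdot> a)" by (rule assoc_eq) (use D p cua in simp_all)
      ultimately show "p2 \<cdot> (pr \<cdot> a) = p2 \<cdot> (D \<cdot> (u \<cdot> a))" using cua a2 by simp
    qed
    hence "\<phi> \<cdot> (pr \<cdot> a) = \<phi> \<cdot> (D \<cdot> (u \<cdot> a))" by simp
    moreover have "(\<phi> \<cdot> pr) \<cdot> a = \<phi> \<cdot> (pr \<cdot> a)" by (rule assoc') (use a1 pr dph in simp_all)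
    moreover have "(\<phi> \<cdot> D) \<cdot> (u \<cdot> a) = \<phi> \<cdot> (D \<cdot> (u \<cdot> a))" by (rule assoc') (use D cua dph in simp_all)
    moreover have "zm ((\<phi> \<cdot> D) \<cdot> (u \<cdot> a))" by (rule zm_compR[OF ker_zero[OF ph]]) (use D cua dph in simp)
    ultimately have z2: "zm ((\<phi> \<cdot> pr) \<cdot> a)" by simp
    have c2: "cdm a = dm (\<phi> \<cdot> pr)" using a1 pr dph by simp
    obtain w where "dm w = dm a" "cdm w = dm e" "e \<cdot> w = a" by (rule ker_facE[OF e c2 z2])
    thus "\<exists>w. dm w = dm a \<and> cdm w = dm e \<and> e \<cdot> w = a" by blast
  qed
qed

lemma zk_mono: assumes zk: "\<forall>a. cdm a = dm f \<and> zm (f \<cdot> a) \<longrightarrow> zm a" shows "mono C f"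
proof -
  obtain cf where cf: "is_cokernel C cf f" using ex_coker by auto
  obtain m where m: "is_kernel C m cf" using ex_ker by auto
  have dcf: "dm cf = cdm f" using coker_dom[OF cf] .
  have cm: "cdm m = dm cf" using ker_cod[OF m] .
  have mm: "mono C m" using ker_mono[OF m] .
  obtain e' where e': "dm e' = dm f" "cdm e' = dm m" "m \<cdot> e' = f"
    by (rule ker_facE[OF m]) (use dcf coker_zero[OF cf] in auto)
  have epi': "epi C e'"
  proof (rule epiI)
    fix g h assume g: "dm g = cdm e'" "dm h = cdm e'" "cdm g = cdm h" "g \<cdot> e' = h \<cdot> e'"
    have gh: "dm g = dm h" "cdm g = cdm h" using g by auto
    then obtain eq where eq: "cdm eq = dm g" "mono C eq" "g \<cdot> eq = h \<cdot> eq"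
      and equ: "\<And>a. cdm a = dm g \<Longrightarrow> g \<cdot> a = h \<cdot> a \<Longrightarrow> \<exists>w. dm w = dm a \<and> cdm w = dm eq \<and> eq \<cdot> w = a"
      by (rule equalizer) (rule that)
    have "\<exists>w. dm w = dm e' \<and> cdm w = dm eq \<and> eq \<cdot> w = e'" by (rule equ) (use g in auto)
    then obtain w where w: "dm w = dm e'" "cdm w = dm eq" "eq \<cdot> w = e'" by (elim exE conjE) (rule that)
    have meq: "mono C (m \<cdot> eq)" by (rule mono_comp[OF mm eq(2)]) (use eq g e' in simp)
    obtain \<phi> where ph: "is_kernel C (m \<cdot> eq) \<phi>" using mono_ker[OF meq] by auto
    have dph: "dm \<phi> = cdm m" using ker_cod[OF ph] eq g e' by simp
    have "f = (m \<cdot> eq) \<cdot> w" using e' w eq g by (simp add: assoc')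
    hence "\<phi> \<cdot> f = (\<phi> \<cdot> (m \<cdot> eq)) \<cdot> w" using eq g e' w dph by (simp add: assoc')
    moreover have "zm ((\<phi> \<cdot> (m \<cdot> eq)) \<cdot> w)" by (rule zm_compR[OF ker_zero[OF ph]]) (use eq g e' w dph in simp)
    ultimately have zf: "zm (\<phi> \<cdot> f)" by simp
    obtain \<psi> where ps: "dm \<psi> = cdm cf" "cdm \<psi> = cdm \<phi>" "\<psi> \<cdot> cf = \<phi>"
      by (rule coker_facE[OF cf]) (use dph cm dcf zf in auto)
    have "\<phi> \<cdot> m = \<psi> \<cdot> (cf \<cdot> m)" by (rule assoc_eq[symmetric]) (use ps cm in auto)
    moreover have "zm (\<psi> \<cdot> (cf \<cdot> m))" by (rule zm_compL[OF ker_zero[OF m]]) (use ps cm in simp)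
    ultimately have zpm: "zm (\<phi> \<cdot> m)" by simp
    have cmp: "cdm m = dm \<phi>" using dph by simp
    obtain z where z: "dm z = dm m" "cdm z = dm (m \<cdot> eq)" "(m \<cdot> eq) \<cdot> z = m"
      by (rule ker_facE[OF ph cmp zpm])
    have "m \<cdot> (eq \<cdot> z) = m \<cdot> ide (dm m)" using z eq g e' by (simp add: assoc')
    hence ez: "eq \<cdot> z = ide (dm m)" using mono_cancel[OF mm] z eq g e' by simp
    have "g = g \<cdot> (eq \<cdot> z)" using ez g e' by simp
    also have "\<dots> = (g \<cdot> eq) \<cdot> z" by (rule assoc) (use z eq g e' in auto)
    also have "\<dots> = (h \<cdot> eq) \<cdot> z" using eq by simp
    also have "\<dots> = h \<cdot> (eq \<cdot> z)" by (rule assoc') (use z eq g e' in auto)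
    also have "\<dots> = h" using ez g e' by simp
    finally show "g = h" .
  qed
  obtain h0 where h0: "is_cokernel C e' h0" using epi_coker[OF epi'] by auto
  have ch0: "cdm h0 = dm e'" using coker_dom[OF h0] by simp
  have "zm (m \<cdot> (e' \<cdot> h0))" by (rule zm_compL[OF coker_zero[OF h0]]) (use ch0 e' in simp)
  hence "zm (f \<cdot> h0)" using e' ch0 by (simp add: assoc'[symmetric])
  hence zh: "zm h0" using zk ch0 e' by auto
  have zi: "zm (ide (cdm h0) \<cdot> h0)" using zh by simp
  have di: "dm (ide (cdm h0)) = cdm h0" by simp
  obtain u where u: "dm u = cdm e'" "cdm u = cdm (ide (cdm h0))" "u \<cdot> e' = ide (cdm h0)"
    by (rule coker_facE[OF h0 di zi])
  have "mono C e'" by (rule sect_mono[of u]) (use u ch0 in auto)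
  hence "mono C (m \<cdot> e')" using mono_comp[OF mm] e' by auto
  thus ?thesis using e' by simp
qed

lemma ab_opc: "ab (opc C)" by unfold_locales (rule opc_abelian[OF abel])

lemma zk_epi: assumes "\<forall>a. dm a = cdm f \<and> zm (a \<cdot> f) \<longrightarrow> zm a" shows "epi C f"
proof -
  interpret D: ab "opc C" by (rule ab_opc)
  have "mono (opc C) f" by (rule D.zk_mono) (use assms in simp)
  thus ?thesis by simp
qed

lemma epi_is_coker_ker: assumes "epi C e" "is_kernel C k e" shows "is_cokernel C e k"
proof -
  interpret D: ab "opc C" by (rule ab_opc)
  have "is_kernel (opc C) e k" by (rule D.mono_is_ker_coker) (use assms in simp_all)
  thus ?thesis by simp
qed


lemma split_coker:
  assumes t1: "dm t = cdm k" and t2: "cdm t = dm k" and t3: "t \<cdot> k = ide (dm k)"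
    and q: "is_cokernel C q k"
  obtains s2 where "dm s2 = cdm q" "cdm s2 = cdm k" "q \<cdot> s2 = ide (cdm q)" "zm (t \<cdot> s2)"
proof -
  define K where "K = dm k"
  define M where "M = cdm k"
  define Q where "Q = cdm q"
  have dq: "dm q = M" using coker_dom[OF q] M_def by simp
  have kmono: "mono C k" by (rule sect_mono[OF t3]) (use t1 in simp)
  have kq: "is_kernel C k q" by (rule mono_is_ker_coker[OF kmono q])
  have qepi: "epi C q" by (rule coker_epi[OF q])
  obtain p1 P p2 where p: "dm p1 = P" "cdm p1 = K" "dm p2 = P" "cdm p2 = Q"
    and pair: "\<And>f g. dm f = dm g \<Longrightarrow> cdm f = K \<Longrightarrow> cdm g = Q \<Longrightarrow>
      \<exists>u. dm u = dm f \<and> cdm u = P \<and> p1 \<cdot> u = f \<and> p2 \<cdot> u = g"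
    and uq: "\<And>u v. dm u = dm v \<Longrightarrow> cdm u = P \<Longrightarrow> cdm v = P \<Longrightarrow> p1 \<cdot> u = p1 \<cdot> v \<Longrightarrow> p2 \<cdot> u = p2 \<cdot> v \<Longrightarrow> u = v"
    by (rule product[where a=K and b=Q]) blast
  have "\<exists>u. dm u = dm t \<and> cdm u = P \<and> p1 \<cdot> u = t \<and> p2 \<cdot> u = q"
    by (rule pair) (use t1 t2 dq K_def M_def Q_def in simp_all)
  then obtain \<phi> where ph: "dm \<phi> = M" "cdm \<phi> = P" "p1 \<cdot> \<phi> = t" "p2 \<cdot> \<phi> = q"
    by (elim exE conjE) (rule that, use t1 M_def in simp_all)
  obtain zKQ where zKQ: "dm zKQ = K" "cdm zKQ = Q" "zm zKQ" using zm_ex by blast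
  obtain zQK where zQK: "dm zQK = Q" "cdm zQK = K" "zm zQK" using zm_ex by blast
  have "\<exists>u. dm u = dm (ide K) \<and> cdm u = P \<and> p1 \<cdot> u = ide K \<and> p2 \<cdot> u = zKQ"
    by (rule pair) (use zKQ in simp_all)
  then obtain i1 where i1: "dm i1 = K" "cdm i1 = P" "p1 \<cdot> i1 = ide K" "p2 \<cdot> i1 = zKQ"
    by (elim exE conjE) (rule that, simp_all)
  have "\<exists>u. dm u = dm zQK \<and> cdm u = P \<and> p1 \<cdot> u = zQK \<and> p2 \<cdot> u = ide Q"
    by (rule pair) (use zQK in simp_all)
  then obtain i2 where i2: "dm i2 = Q" "cdm i2 = P" "p1 \<cdot> i2 = zQK" "p2 \<cdot> i2 = ide Q"
    by (elim exE conjE) (rule that, use zQK in simp_all)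
  have ck: "cdm k = M" "dm k = K" using M_def K_def by simp_all
  have phmono: "mono C \<phi>"
  proof (rule zk_mono, intro allI impI, elim conjE)
    fix a assume a1: "cdm a = dm \<phi>" and a2: "zm (\<phi> \<cdot> a)"
    have "zm (p1 \<cdot> (\<phi> \<cdot> a))" by (rule zm_compL[OF a2]) (use ph a1 p in simp)
    moreover have "p1 \<cdot> (\<phi> \<cdot> a) = t \<cdot> a" by (rule assoc_eq) (use ph a1 p in simp_all)
    ultimately have zt: "zm (t \<cdot> a)" by simp
    have "zm (p2 \<cdot> (\<phi> \<cdot> a))" by (rule zm_compL[OF a2]) (use ph a1 p in simp)
    moreover have "p2 \<cdot> (\<phi> \<cdot> a) = q \<cdot> a" by (rule assoc_eq) (use ph a1 p in simp_all)
    ultimately have zq: "zm (q \<cdot> a)" by simp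
    have ca: "cdm a = dm q" using a1 ph dq by simp
    obtain w where w: "dm w = dm a" "cdm w = dm k" "k \<cdot> w = a" by (rule ker_facE[OF kq ca zq])
    have "t \<cdot> a = t \<cdot> (k \<cdot> w)" using w by simp
    also have "\<dots> = ide (dm k) \<cdot> w" by (rule assoc_eq[OF t3]) (use w t1 t2 in simp_all)
    also have "\<dots> = w" using w by simp
    finally have "zm w" using zt by simp
    hence "zm (k \<cdot> w)" by (rule zm_compL) (use w in simp)
    thus "zm a" using w by simp
  qed
  have i1mono: "mono C i1" by (rule sect_mono[of p1]) (use i1 p in simp_all)
  have i1ker: "is_kernel C i1 p2" unfolding is_kernel_def hom_def
  proof (intro conjI allI impI)
    show "cdm i1 = dm p2" using i1 p by simp
    show "zm (p2 \<cdot> i1)" using i1 zKQ by simp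
    fix g assume g: "cdm g = dm p2 \<and> zm (p2 \<cdot> g)"
    have g1: "cdm g = P" and g2: "zm (p2 \<cdot> g)" using g p by auto
    have e: "i1 \<cdot> (p1 \<cdot> g) = g"
    proof (rule uq)
      show "dm (i1 \<cdot> (p1 \<cdot> g)) = dm g" "cdm (i1 \<cdot> (p1 \<cdot> g)) = P" "cdm g = P"
        using i1 p g1 by simp_all
      have "p1 \<cdot> (i1 \<cdot> (p1 \<cdot> g)) = ide K \<cdot> (p1 \<cdot> g)" by (rule assoc_eq) (use i1 p g1 in simp_all)
      thus "p1 \<cdot> (i1 \<cdot> (p1 \<cdot> g)) = p1 \<cdot> g" using p g1 by simp
      have "p2 \<cdot> (i1 \<cdot> (p1 \<cdot> g)) = zKQ \<cdot> (p1 \<cdot> g)" by (rule assoc_eq) (use i1 p g1 in simp_all)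
      moreover have "zm (zKQ \<cdot> (p1 \<cdot> g))" by (rule zm_compR[OF zKQ(3)]) (use p g1 zKQ in simp)
      ultimately show "p2 \<cdot> (i1 \<cdot> (p1 \<cdot> g)) = p2 \<cdot> g"
        using zm_uniq[OF _ g2] p g1 zKQ by simp
    qed
    show "\<exists>!u. (dm u = dm g \<and> cdm u = dm i1) \<and> i1 \<cdot> u = g"
    proof (rule ex1I[of _ "p1 \<cdot> g"])
      show "(dm (p1 \<cdot> g) = dm g \<and> cdm (p1 \<cdot> g) = dm i1) \<and> i1 \<cdot> (p1 \<cdot> g) = g"
        using e p g1 i1 by simp
      fix v assume v: "(dm v = dm g \<and> cdm v = dm i1) \<and> i1 \<cdot> v = g"
      show "v = p1 \<cdot> g" by (rule mono_cancel[OF i1mono]) (use v e p g1 i1 in simp_all)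
    qed
  qed
  have p2epi: "epi C p2" by (rule retr_epi[of p2 i2]) (use i2 p in simp_all)
  have p2coker: "is_cokernel C p2 i1" by (rule epi_is_coker_ker[OF p2epi i1ker])
  have phk: "\<phi> \<cdot> k = i1"
  proof (rule uq)
    show "dm (\<phi> \<cdot> k) = dm i1" "cdm (\<phi> \<cdot> k) = P" "cdm i1 = P" using ph i1 ck by simp_all
    have "p1 \<cdot> (\<phi> \<cdot> k) = t \<cdot> k" by (rule assoc_eq) (use ph ck p in simp_all)
    thus "p1 \<cdot> (\<phi> \<cdot> k) = p1 \<cdot> i1" using t3 i1 ck by simp
    have "p2 \<cdot> (\<phi> \<cdot> k) = q \<cdot> k" by (rule assoc_eq) (use ph ck p in simp_all)
    moreover have "zm (q \<cdot> k)" by (rule coker_zero[OF q])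
    ultimately show "p2 \<cdot> (\<phi> \<cdot> k) = p2 \<cdot> i1" using zm_uniq[of "q \<cdot> k" zKQ] i1 zKQ ck dq Q_def by simp
  qed
  have phepi: "epi C \<phi>"
  proof (rule zk_epi, intro allI impI, elim conjE)
    fix \<zeta> assume z1: "dm \<zeta> = cdm \<phi>" and z2: "zm (\<zeta> \<cdot> \<phi>)"
    have "zm ((\<zeta> \<cdot> \<phi>) \<cdot> k)" by (rule zm_compR[OF z2]) (use z1 ph ck in simp)
    moreover have "(\<zeta> \<cdot> \<phi>) \<cdot> k = \<zeta> \<cdot> i1" using assoc'[of k \<phi> \<zeta>] phk z1 ph ck by simp
    ultimately have zi: "zm (\<zeta> \<cdot> i1)" by simp
    have di: "dm \<zeta> = cdm i1" using z1 ph i1 by simp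
    obtain w where w: "dm w = cdm p2" "cdm w = cdm \<zeta>" "w \<cdot> p2 = \<zeta>" by (rule coker_facE[OF p2coker di zi])
    have "\<zeta> \<cdot> \<phi> = w \<cdot> (p2 \<cdot> \<phi>)" by (rule assoc_eq[symmetric]) (use w ph p in simp_all)
    hence "zm (w \<cdot> q)" using z2 ph by simp
    hence "zm w" by (rule zm_epi[OF qepi]) (use w p Q_def in simp)
    hence "zm (w \<cdot> p2)" by (rule zm_compR) (use w in simp)
    thus "zm \<zeta>" using w by simp
  qed
  obtain \<psi> where ps: "dm \<psi> = cdm \<phi>" "cdm \<psi> = dm \<phi>" "\<psi> \<cdot> \<phi> = ide (dm \<phi>)" "\<phi> \<cdot> \<psi> = ide (cdm \<phi>)"
    using mono_epi_iso[OF phmono phepi] by (elim exE conjE) (rule that)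
  show ?thesis
  proof (rule that[of "\<psi> \<cdot> i2"])
    show "dm (\<psi> \<cdot> i2) = cdm q" "cdm (\<psi> \<cdot> i2) = cdm k" using ps ph i2 Q_def M_def by simp_all
    have "q \<cdot> (\<psi> \<cdot> i2) = (p2 \<cdot> \<phi>) \<cdot> (\<psi> \<cdot> i2)" using ph by simp
    also have "\<dots> = p2 \<cdot> (\<phi> \<cdot> (\<psi> \<cdot> i2))" by (rule assoc') (use ps ph i2 p in simp_all)
    also have "\<dots> = p2 \<cdot> (ide (cdm \<phi>) \<cdot> i2)" by (subst assoc_eq[OF ps(4)]) (use ps ph i2 in simp_all)
    also have "\<dots> = ide Q" using i2 ph by simp
    finally show "q \<cdot> (\<psi> \<cdot> i2) = ide (cdm q)" using Q_def by simp
    have "t \<cdot> (\<psi> \<cdot> i2) = (p1 \<cdot> \<phi>) \<cdot> (\<psi> \<cdot> i2)" using ph by simp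
    also have "\<dots> = p1 \<cdot> (\<phi> \<cdot> (\<psi> \<cdot> i2))" by (rule assoc') (use ps ph i2 p in simp_all)
    also have "\<dots> = p1 \<cdot> (ide (cdm \<phi>) \<cdot> i2)" by (subst assoc_eq[OF ps(4)]) (use ps ph i2 in simp_all)
    also have "\<dots> = zQK" using i2 ph by simp
    finally show "zm (t \<cdot> (\<psi> \<cdot> i2))" using zQK by simp
  qed
qed

lemma split_ker:
  assumes t1: "dm t = cdm k" and t2: "cdm t = dm k" and t3: "k \<cdot> t = ide (cdm k)"
    and q: "is_kernel C q k"
  obtains s2 where "dm s2 = dm k" "cdm s2 = dm q" "s2 \<cdot> q = ide (dm q)" "zm (s2 \<cdot> t)"
proof -
  interpret D: ab "opc C" by (rule ab_opc)
  have q': "is_cokernel (opc C) q k" using q by simp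
  obtain s2 where "Dom (opc C) s2 = Cod (opc C) q" "Cod (opc C) s2 = Cod (opc C) k"
      "Comp (opc C) q s2 = Id (opc C) (Cod (opc C) q)" "zero_mor (opc C) (Comp (opc C) t s2)"
    by (rule D.split_coker[OF _ _ _ q']) (use t1 t2 t3 in simp_all)
  thus ?thesis using that by simp
qed


lemma ftE: assumes "factors_through C a k"
  obtains u where "dm u = dm a" "cdm u = dm k" "k \<cdot> u = a" "cdm a = cdm k"
proof -
  have "cdm a = cdm k" "\<exists>u. hom C (dm a) (dm k) u \<and> k \<cdot> u = a" using assms unfolding factors_through_def by auto
  thus ?thesis unfolding hom_def by (elim exE conjE) (rule that)
qed

lemma ftI: "dm u = dm a \<Longrightarrow> cdm u = dm k \<Longrightarrow> k \<cdot> u = a \<Longrightarrow> factors_through C a k"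
  unfolding factors_through_def hom_def by (auto intro!: exI[of _ u])

lemma ft_trans: assumes "factors_through C a b" "factors_through C b c" shows "factors_through C a c"
proof -
  obtain u where u: "dm u = dm a" "cdm u = dm b" "b \<cdot> u = a" "cdm a = cdm b" using assms(1) by (rule ftE)
  obtain v where v: "dm v = dm b" "cdm v = dm c" "c \<cdot> v = b" "cdm b = cdm c" using assms(2) by (rule ftE)
  have "c \<cdot> (v \<cdot> u) = (c \<cdot> v) \<cdot> u" by (rule assoc) (use u v in simp_all)
  thus ?thesis using u v by (intro ftI[of "v \<cdot> u"]) simp_all
qed

lemma ft_comp: "cdm u = dm k \<Longrightarrow> factors_through C (k \<cdot> u) k"
  by (rule ftI[of u]) simp_all

lemma secE: assumes "is_section C s" obtains r where "dm r = cdm s" "cdm r = dm s" "r \<cdot> s = ide (dm s)"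
  using assms unfolding is_section_def hom_def by blast

lemma secI: "dm r = cdm s \<Longrightarrow> cdm r = dm s \<Longrightarrow> r \<cdot> s = ide (dm s) \<Longrightarrow> is_section C s"
  unfolding is_section_def hom_def by blast

lemma retrE: assumes "is_retraction C s" obtains r where "dm r = cdm s" "cdm r = dm s" "s \<cdot> r = ide (cdm s)"
  using assms unfolding is_retraction_def hom_def by blast

lemma sec_mono: "is_section C s \<Longrightarrow> mono C s"
  by (erule secE) (rule sect_mono, simp_all, simp)

lemma inter_univ:
  assumes J: "is_intersection C M I ks j" and mo: "\<forall>x\<in>I. mono C (ks x)"
    and t: "cdm t = M" and ft: "\<forall>x\<in>I. factors_through C t (ks x)"
  shows "factors_through C t j"
proof -
  obtain ct where ct: "is_cokernel C ct t" using ex_coker by blast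
  obtain m where m: "is_kernel C m ct" using ex_ker by blast
  have dct: "dm ct = cdm t" using coker_dom[OF ct] .
  have cm: "cdm m = dm ct" using ker_cod[OF m] .
  have c1: "cdm t = dm ct" using dct by simp
  obtain u0 where u0: "dm u0 = dm t" "cdm u0 = dm m" "m \<cdot> u0 = t" by (rule ker_facE[OF m c1 coker_zero[OF ct]])
  have mm: "mono C m" by (rule ker_mono[OF m])
  have "\<forall>x\<in>I. factors_through C m (ks x)"
  proof
    fix x assume x: "x \<in> I"
    obtain v where v: "dm v = dm t" "cdm v = dm (ks x)" "ks x \<cdot> v = t" "cdm t = cdm (ks x)"
      using ft x by (meson ftE)
    obtain g where g: "is_kernel C (ks x) g" using mono_ker mo x by blast
    have dg: "dm g = cdm (ks x)" using ker_cod[OF g] by simp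
    have "g \<cdot> t = (g \<cdot> ks x) \<cdot> v" using assoc[of v "ks x" g] v dg by simp
    moreover have "zm ((g \<cdot> ks x) \<cdot> v)" by (rule zm_compR[OF ker_zero[OF g]]) (use v dg in simp)
    ultimately have z: "zm (g \<cdot> t)" by simp
    have c2: "dm g = cdm t" using dg v by simp
    obtain w where w: "dm w = cdm ct" "cdm w = cdm g" "w \<cdot> ct = g" by (rule coker_facE[OF ct c2 z])
    have "g \<cdot> m = w \<cdot> (ct \<cdot> m)" using assoc[of m ct w] w cm by simp
    moreover have "zm (w \<cdot> (ct \<cdot> m))" by (rule zm_compL[OF ker_zero[OF m]]) (use w cm in simp)
    ultimately have z2: "zm (g \<cdot> m)" by simp
    have c3: "cdm m = dm g" using cm dct dg v by simp
    obtain y where y: "dm y = dm m" "cdm y = dm (ks x)" "ks x \<cdot> y = m" by (rule ker_facE[OF g c3 z2])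
    show "factors_through C m (ks x)" by (rule ftI[OF y])
  qed
  moreover have "mono C m" "cdm m = M" using mm cm dct t by simp_all
  ultimately have "factors_through C m j" using J unfolding is_intersection_def by blast
  moreover have "factors_through C t m" by (rule ftI[OF u0])
  ultimately show ?thesis using ft_trans by blast
qed

lemma sum_univ:
  assumes S: "is_sum C M I ks s" and z: "dm \<zeta> = M" and k: "\<forall>x\<in>I. zm (\<zeta> \<cdot> ks x)"
  shows "zm (\<zeta> \<cdot> s)"
proof -
  obtain m where m: "is_kernel C m \<zeta>" using ex_ker by blast
  have cm: "cdm m = dm \<zeta>" using ker_cod[OF m] .
  have "\<forall>x\<in>I. factors_through C (ks x) m"
  proof
    fix x assume x: "x \<in> I"
    have "factors_through C (ks x) s" using S x unfolding is_sum_def by blast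
    hence c: "cdm (ks x) = dm \<zeta>" using S z unfolding factors_through_def is_sum_def by auto
    obtain u where u: "dm u = dm (ks x)" "cdm u = dm m" "m \<cdot> u = ks x" by (rule ker_facE[OF m c]) (use k x in simp)
    show "factors_through C (ks x) m" by (rule ftI[OF u])
  qed
  moreover have "mono C m" "cdm m = M" using ker_mono[OF m] cm z by simp_all
  ultimately have "factors_through C s m" using S unfolding is_sum_def by blast
  then obtain y where y: "dm y = dm s" "cdm y = dm m" "m \<cdot> y = s" by (rule ftE)
  have "\<zeta> \<cdot> s = (\<zeta> \<cdot> m) \<cdot> y" using assoc[of y m \<zeta>] y cm by simp
  moreover have "zm ((\<zeta> \<cdot> m) \<cdot> y)" by (rule zm_compR[OF ker_zero[OF m]]) (use y cm in simp)
  ultimately show ?thesis by simp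
qed


lemma core1:
  assumes sp: "self_F_split b C i d" and ki: "is_kernel C i d"
    and g1: "dm g = cdm i" and g2: "cdm g = cdm i"
    and e1: "dm e = cdm i" and e2: "cdm e = cdm i"
    and jm: "mono C j" and j2: "cdm j = cdm i" and ej: "e \<cdot> j = j" and zj: "zm ((d \<cdot> g) \<cdot> j)"
    and H: "\<And>y. cdm y = cdm i \<Longrightarrow> zm ((d \<cdot> g) \<cdot> y) \<Longrightarrow> factors_through C (e \<cdot> y) j"
  shows "is_section C j"
proof -
  have cdi: "cdm i = dm d" using ker_cod[OF ki] .
  obtain x where x: "is_kernel C x (d \<cdot> g)" using ex_ker by blast
  have "hom C (cdm i) (cdm i) g \<and> is_kernel C x (d \<cdot> g)" using x g1 g2 unfolding hom_def by simp
  hence "is_section C x" using sp unfolding self_F_split_def by blast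
  then obtain r where r: "dm r = cdm x" "cdm r = dm x" "r \<cdot> x = ide (dm x)" by (rule secE)
  have cx: "cdm x = cdm i" using ker_cod[OF x] g1 g2 cdi by simp
  have c1: "cdm j = dm (d \<cdot> g)" using j2 g1 g2 cdi by simp
  obtain u where u: "dm u = dm j" "cdm u = dm x" "x \<cdot> u = j" by (rule ker_facE[OF x c1 zj])
  have "factors_through C (e \<cdot> x) j" by (rule H[OF cx ker_zero[OF x]])
  then obtain \<rho>0 where r0: "dm \<rho>0 = dm (e \<cdot> x)" "cdm \<rho>0 = dm j" "j \<cdot> \<rho>0 = e \<cdot> x" by (rule ftE)
  have dr0: "dm \<rho>0 = dm x" using r0 cx e1 by simp
  have "j \<cdot> (\<rho>0 \<cdot> u) = (j \<cdot> \<rho>0) \<cdot> u" by (rule assoc) (use r0 dr0 u in simp_all)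
  also have "\<dots> = (e \<cdot> x) \<cdot> u" using r0 by simp
  also have "\<dots> = e \<cdot> (x \<cdot> u)" by (rule assoc') (use cx e1 u in simp_all)
  also have "\<dots> = j \<cdot> ide (dm j)" using u ej by simp
  finally have "\<rho>0 \<cdot> u = ide (dm j)" by (rule mono_cancel[OF jm]) (use r0 dr0 u in simp_all)
  hence ru: "\<rho>0 \<cdot> u = ide (dm j)" .
  have "(\<rho>0 \<cdot> r) \<cdot> j = \<rho>0 \<cdot> (r \<cdot> (x \<cdot> u))" using assoc'[of j r \<rho>0] r r0 dr0 u j2 cx by simp
  also have "\<dots> = \<rho>0 \<cdot> ((r \<cdot> x) \<cdot> u)" using assoc[of u x r] r u by simp
  also have "\<dots> = ide (dm j)" using r u ru by simp
  finally have "(\<rho>0 \<cdot> r) \<cdot> j = ide (dm j)" .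
  thus ?thesis by (intro secI[of "\<rho>0 \<cdot> r"]) (use r r0 dr0 j2 cx in simp_all)
qed

lemma part1i:
  assumes sp: "self_F_split b C i d" and ki: "is_kernel C i d" and im: "mono C i"
    and k1: "cdm k = cdm i" and t1: "dm t = cdm i" and t2: "cdm t = dm k" and t3: "t \<cdot> k = ide (dm k)"
    and jm: "mono C j" and j2: "cdm j = cdm i" and ji: "factors_through C j i" and jk: "factors_through C j k"
    and univ: "\<And>\<tau>. cdm \<tau> = cdm i \<Longrightarrow> factors_through C \<tau> i \<Longrightarrow> factors_through C \<tau> k \<Longrightarrow> factors_through C \<tau> j"
  shows "is_section C j"
proof -
  have cdi: "cdm i = dm d" using ker_cod[OF ki] .
  define e where "e = k \<cdot> t"
  have e1: "dm e = cdm i" "cdm e = cdm i" using e_def t1 t2 k1 by simp_all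
  obtain c where c: "dm c = dm j" "cdm c = dm k" "k \<cdot> c = j" using jk by (rule ftE)
  obtain a where a: "dm a = dm j" "cdm a = dm i" "i \<cdot> a = j" using ji by (rule ftE)
  have ej: "e \<cdot> j = j"
  proof -
    have "e \<cdot> j = k \<cdot> (t \<cdot> (k \<cdot> c))" using e_def assoc'[of j t k] t1 t2 k1 j2 c by simp
    also have "\<dots> = k \<cdot> (ide (dm k) \<cdot> c)" using assoc_eq[OF t3, of c] c t1 k1 by simp
    finally show ?thesis using c by simp
  qed
  have dj: "zm (d \<cdot> j)"
  proof -
    have "d \<cdot> j = (d \<cdot> i) \<cdot> a" using assoc[of a i d] a cdi by simp
    moreover have "zm ((d \<cdot> i) \<cdot> a)" by (rule zm_compR[OF ker_zero[OF ki]]) (use a cdi in simp)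
    ultimately show ?thesis by simp
  qed
  show ?thesis
  proof (rule core1[OF sp ki e1 e1 jm j2 ej])
    show "zm ((d \<cdot> e) \<cdot> j)" using assoc'[of j e d] ej e1 j2 cdi dj by simp
    fix y assume y1: "cdm y = cdm i" and y2: "zm ((d \<cdot> e) \<cdot> y)"
    have fk: "factors_through C (e \<cdot> y) k"
      using ft_comp[of "t \<cdot> y" k] e_def assoc'[of y t k] y1 t1 t2 k1 by simp
    have "zm (d \<cdot> (e \<cdot> y))" using y2 assoc'[of y e d] e1 y1 cdi by simp
    then obtain w where w: "dm w = dm (e \<cdot> y)" "cdm w = dm i" "i \<cdot> w = e \<cdot> y"
      using ker_facE[OF ki] e1 y1 cdi by (metis cod_comp)
    have fi: "factors_through C (e \<cdot> y) i" by (rule ftI[OF w])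
    show "factors_through C (e \<cdot> y) j" by (rule univ[OF _ fi fk]) (use e1 y1 in simp)
  qed
qed


lemma bin1:
  assumes sp: "self_F_split b C i d" and ki: "is_kernel C i d" and im: "mono C i"
    and k1: "cdm k1 = cdm i" and t11: "dm t1 = cdm i" and t12: "cdm t1 = dm k1" and t13: "t1 \<cdot> k1 = ide (dm k1)"
    and k2: "cdm k2 = cdm i" and t21: "dm t2 = cdm i" and t22: "cdm t2 = dm k2" and t23: "t2 \<cdot> k2 = ide (dm k2)"
    and i2: "factors_through C i k2"
    and jm: "mono C j" and j2: "cdm j = cdm i" and jk1: "factors_through C j k1" and jk2: "factors_through C j k2"
    and univ: "\<And>\<tau>. cdm \<tau> = cdm i \<Longrightarrow> factors_through C \<tau> k1 \<Longrightarrow> factors_through C \<tau> k2 \<Longrightarrow> factors_through C \<tau> j"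
  shows "is_section C j"
proof -
  have cdi: "cdm i = dm d" using ker_cod[OF ki] .
  obtain q2 where q2: "is_cokernel C q2 k2" using ex_coker by blast
  have dq2: "dm q2 = cdm i" using coker_dom[OF q2] k2 by simp
  obtain s2 where s2: "dm s2 = cdm q2" "cdm s2 = cdm k2" "q2 \<cdot> s2 = ide (cdm q2)" "zm (t2 \<cdot> s2)"
    by (rule split_coker[OF _ t22 t23 q2]) (use t21 k2 in simp)
  have k2m: "mono C k2" by (rule sect_mono[OF t23]) (use t21 k2 in simp)
  have kq: "is_kernel C k2 q2" by (rule mono_is_ker_coker[OF k2m q2])
  define p where "p = s2 \<cdot> q2"
  have p1: "dm p = cdm i" "cdm p = cdm i" using p_def s2 dq2 k2 by simp_all
  obtain a2 where a2: "dm a2 = dm i" "cdm a2 = dm k2" "k2 \<cdot> a2 = i" using i2 by (rule ftE)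
  have P: "factors_through C y k2" if y1: "cdm y = cdm i" and y2: "zm (d \<cdot> (p \<cdot> y))" for y
  proof -
    have c: "cdm (p \<cdot> y) = dm d" using p1 y1 cdi by simp
    obtain w where w: "dm w = dm (p \<cdot> y)" "cdm w = dm i" "i \<cdot> w = p \<cdot> y" by (rule ker_facE[OF ki c y2])
    have py: "p \<cdot> y = k2 \<cdot> (a2 \<cdot> w)" using assoc[of w a2 k2] a2 w by simp
    have "t2 \<cdot> (p \<cdot> y) = (t2 \<cdot> s2) \<cdot> (q2 \<cdot> y)"
      using p_def assoc'[of y q2 s2] assoc[of "q2 \<cdot> y" s2 t2] s2 y1 dq2 t21 k2 by simp
    moreover have "zm ((t2 \<cdot> s2) \<cdot> (q2 \<cdot> y))" by (rule zm_compR[OF s2(4)]) (use s2 y1 dq2 t21 k2 in simp)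
    ultimately have "zm (t2 \<cdot> (p \<cdot> y))" by simp
    moreover have "t2 \<cdot> (p \<cdot> y) = a2 \<cdot> w" using py assoc_eq[OF t23, of "a2 \<cdot> w"] a2 w t21 k2 by simp
    ultimately have "zm (a2 \<cdot> w)" by simp
    hence zpy: "zm (p \<cdot> y)" using py zm_compL[of "a2 \<cdot> w" k2] a2 w by simp
    have "q2 \<cdot> (p \<cdot> y) = q2 \<cdot> (s2 \<cdot> (q2 \<cdot> y))" using p_def assoc'[of y q2 s2] s2 y1 dq2 k2 by simp
    also have "\<dots> = (q2 \<cdot> s2) \<cdot> (q2 \<cdot> y)" by (rule assoc) (use s2 y1 dq2 k2 in simp_all)
    also have "\<dots> = q2 \<cdot> y" using s2 y1 dq2 by simp
    finally have "zm (q2 \<cdot> y)" using zm_compL[OF zpy, of q2] p1 dq2 y1 by simp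
    moreover have "cdm y = dm q2" using y1 dq2 by simp
    ultimately obtain v where "dm v = dm y" "cdm v = dm k2" "k2 \<cdot> v = y" using ker_facE[OF kq] by metis
    thus ?thesis by (rule ftI)
  qed
  define e where "e = k1 \<cdot> t1"
  have e1: "dm e = cdm i" "cdm e = cdm i" using e_def t11 t12 k1 by simp_all
  define g where "g = p \<cdot> e"
  have g1: "dm g = cdm i" "cdm g = cdm i" using g_def e1 p1 by simp_all
  obtain c1 where c1: "dm c1 = dm j" "cdm c1 = dm k1" "k1 \<cdot> c1 = j" using jk1 by (rule ftE)
  obtain c2 where c2: "dm c2 = dm j" "cdm c2 = dm k2" "k2 \<cdot> c2 = j" using jk2 by (rule ftE)
  have ej: "e \<cdot> j = j"
  proof -
    have "e \<cdot> j = k1 \<cdot> (t1 \<cdot> (k1 \<cdot> c1))" using e_def assoc'[of j t1 k1] t11 t12 k1 j2 c1 by simp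
    also have "\<dots> = k1 \<cdot> (ide (dm k1) \<cdot> c1)" using assoc_eq[OF t13, of c1] c1 t11 k1 by simp
    finally show ?thesis using c1 by simp
  qed
  have zpj: "zm (p \<cdot> j)"
  proof -
    have "p \<cdot> j = s2 \<cdot> ((q2 \<cdot> k2) \<cdot> c2)"
      using p_def assoc'[of j q2 s2] assoc[of c2 k2 q2] c2 s2 dq2 j2 k2 by simp
    moreover have "zm (s2 \<cdot> ((q2 \<cdot> k2) \<cdot> c2))"
      by (rule zm_compL[OF zm_compR[OF coker_zero[OF q2]]]) (use c2 s2 k2 dq2 in simp_all)
    ultimately show ?thesis by simp
  qed
  show ?thesis
  proof (rule core1[OF sp ki g1 e1 jm j2 ej])
    have "(d \<cdot> g) \<cdot> j = d \<cdot> (p \<cdot> (e \<cdot> j))"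
      using g_def assoc'[of j g d] assoc'[of j e p] g1 e1 p1 j2 cdi by simp
    also have "\<dots> = d \<cdot> (p \<cdot> j)" using ej by simp
    finally show "zm ((d \<cdot> g) \<cdot> j)" using zm_compL[OF zpj, of d] p1 cdi j2 by simp
    fix y assume y1: "cdm y = cdm i" and y2: "zm ((d \<cdot> g) \<cdot> y)"
    have fk1: "factors_through C (e \<cdot> y) k1"
      using ft_comp[of "t1 \<cdot> y" k1] e_def assoc'[of y t1 k1] y1 t11 t12 k1 by simp
    have "(d \<cdot> g) \<cdot> y = d \<cdot> (p \<cdot> (e \<cdot> y))"
      using g_def assoc'[of y g d] assoc'[of y e p] g1 e1 p1 y1 cdi by simp
    hence fk2: "factors_through C (e \<cdot> y) k2" using P[of "e \<cdot> y"] y2 e1 y1 by simp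
    show "factors_through C (e \<cdot> y) j" by (rule univ[OF _ fk1 fk2]) (use e1 y1 in simp)
  qed
qed


lemma kill:
  assumes q: "is_cokernel C q k" and cq: "is_cokernel C cQ (q \<cdot> w)" and ka: "is_kernel C \<kappa> (cQ \<cdot> q)"
    and w: "cdm w = cdm k" and z1: "dm \<zeta> = cdm k" and z2: "zm (\<zeta> \<cdot> k)" and z3: "zm (\<zeta> \<cdot> w)"
  shows "zm (\<zeta> \<cdot> \<kappa>)"
proof -
  have dq: "dm q = cdm k" using coker_dom[OF q] .
  have dcq: "dm cQ = cdm q" using coker_dom[OF cq] w dq by simp
  have c1: "dm \<zeta> = cdm k" using z1 .
  obtain z' where z': "dm z' = cdm q" "cdm z' = cdm \<zeta>" "z' \<cdot> q = \<zeta>" by (rule coker_facE[OF q c1 z2])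
  have "z' \<cdot> (q \<cdot> w) = \<zeta> \<cdot> w" using assoc_eq[OF z'(3), of w] z' w dq by simp
  hence z4: "zm (z' \<cdot> (q \<cdot> w))" using z3 by simp
  have c2: "dm z' = cdm (q \<cdot> w)" using z' w dq by simp
  obtain z'' where z'': "dm z'' = cdm cQ" "cdm z'' = cdm z'" "z'' \<cdot> cQ = z'" by (rule coker_facE[OF cq c2 z4])
  have ck: "cdm \<kappa> = dm (cQ \<cdot> q)" using ker_cod[OF ka] .
  have ck2: "cdm \<kappa> = dm q" using ck dcq by simp
  have "\<zeta> \<cdot> \<kappa> = (z'' \<cdot> cQ) \<cdot> (q \<cdot> \<kappa>)" using assoc'[of \<kappa> q z'] z' z'' ck2 by simp
  also have "\<dots> = z'' \<cdot> ((cQ \<cdot> q) \<cdot> \<kappa>)" using assoc'[of "q \<cdot> \<kappa>" cQ z''] assoc[of \<kappa> q cQ] z'' dcq ck2 by simp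
  finally have e: "\<zeta> \<cdot> \<kappa> = z'' \<cdot> ((cQ \<cdot> q) \<cdot> \<kappa>)" .
  have "zm (z'' \<cdot> ((cQ \<cdot> q) \<cdot> \<kappa>))" by (rule zm_compL[OF ker_zero[OF ka]]) (use z'' dcq ck2 in simp)
  thus ?thesis using e by simp
qed

lemma bin2:
  assumes k1: "cdm k = M" and t1: "dm t = M" and t2: "cdm t = dm k" and t3: "t \<cdot> k = ide (dm k)"
    and w1: "cdm w = M"
    and q: "is_cokernel C q k" and s21: "dm s2 = cdm q" and s22: "cdm s2 = M" and s23: "q \<cdot> s2 = ide (cdm q)"
    and c: "is_cokernel C c (s2 \<cdot> (q \<cdot> w))" and sg1: "dm \<sigma> = cdm c" and sg2: "cdm \<sigma> = dm c" and sg3: "c \<cdot> \<sigma> = ide (cdm c)"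
    and sm: "mono C s" and s1: "cdm s = M" and ws: "factors_through C w s" and ks: "factors_through C k s"
    and univ: "\<And>m. mono C m \<Longrightarrow> cdm m = M \<Longrightarrow> factors_through C w m \<Longrightarrow> factors_through C k m \<Longrightarrow> factors_through C s m"
  shows "is_section C s"
proof -
  have dq: "dm q = M" using coker_dom[OF q] k1 by simp
  obtain cQ where cq: "is_cokernel C cQ (q \<cdot> w)" using ex_coker by blast
  have dcq: "dm cQ = cdm q" using coker_dom[OF cq] w1 dq by simp
  have cqepi: "epi C cQ" by (rule coker_epi[OF cq])
  define \<gamma> where "\<gamma> = cQ \<cdot> q"
  have g1: "dm \<gamma> = M" "cdm \<gamma> = cdm cQ" using \<gamma>_def dcq dq by simp_all
  have dc: "dm c = M" using coker_dom[OF c] s21 s22 w1 dq by simp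
  have cqw: "cdm (q \<cdot> w) = cdm q" using w1 dq by simp
  have sqw: "cdm (s2 \<cdot> (q \<cdot> w)) = M" using s21 s22 cqw by simp
  have cu1: "dm (c \<cdot> s2) = cdm (q \<cdot> w)" using s21 s22 dc cqw by simp
  have "(c \<cdot> s2) \<cdot> (q \<cdot> w) = c \<cdot> (s2 \<cdot> (q \<cdot> w))" by (rule assoc') (use s21 s22 dc cqw in simp_all)
  hence cu2: "zm ((c \<cdot> s2) \<cdot> (q \<cdot> w))" using coker_zero[OF c] by simp
  obtain u where u: "dm u = cdm cQ" "cdm u = cdm (c \<cdot> s2)" "u \<cdot> cQ = c \<cdot> s2" by (rule coker_facE[OF cq cu1 cu2])
  have cu: "cdm u = cdm c" using u s22 dc by simp
  have cv1: "dm \<gamma> = cdm (s2 \<cdot> (q \<cdot> w))" using g1 sqw by simp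
  have "\<gamma> \<cdot> (s2 \<cdot> (q \<cdot> w)) = cQ \<cdot> (q \<cdot> (s2 \<cdot> (q \<cdot> w)))" using \<gamma>_def assoc'[of "s2 \<cdot> (q \<cdot> w)" q cQ] sqw dq dcq by simp
  also have "\<dots> = cQ \<cdot> (ide (cdm q) \<cdot> (q \<cdot> w))" using assoc_eq[OF s23, of "q \<cdot> w"] s21 s22 dq cqw by simp
  also have "\<dots> = cQ \<cdot> (q \<cdot> w)" using cqw by simp
  finally have cv2: "zm (\<gamma> \<cdot> (s2 \<cdot> (q \<cdot> w)))" using coker_zero[OF cq] by simp
  obtain v where v: "dm v = cdm c" "cdm v = cdm \<gamma>" "v \<cdot> c = \<gamma>" by (rule coker_facE[OF c cv1 cv2])
  have "(v \<cdot> u) \<cdot> cQ = v \<cdot> (c \<cdot> s2)" using assoc'[of cQ u v] u v cu by simp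
  also have "\<dots> = \<gamma> \<cdot> s2" using assoc_eq[OF v(3), of s2] v s22 dc by simp
  also have "\<dots> = cQ \<cdot> ide (cdm q)" using \<gamma>_def assoc'[of s2 q cQ] s21 s22 s23 dq dcq by simp
  also have "\<dots> = ide (cdm cQ) \<cdot> cQ" using dcq by simp
  finally have vu: "v \<cdot> u = ide (cdm cQ)" by (rule epi_cancel[OF cqepi]) (use u v cu g1 in simp_all)
  define \<eta> where "\<eta> = s2 \<cdot> (q \<cdot> (\<sigma> \<cdot> u))"
  have su: "dm (\<sigma> \<cdot> u) = cdm cQ" "cdm (\<sigma> \<cdot> u) = M" using sg1 sg2 u cu dc by simp_all
  have qsu: "dm (q \<cdot> (\<sigma> \<cdot> u)) = cdm cQ" "cdm (q \<cdot> (\<sigma> \<cdot> u)) = cdm q" using su dq by simp_all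
  have et: "dm \<eta> = cdm cQ" "cdm \<eta> = M" using \<eta>_def qsu s21 s22 by simp_all
  have "\<gamma> \<cdot> \<eta> = cQ \<cdot> (q \<cdot> (s2 \<cdot> (q \<cdot> (\<sigma> \<cdot> u))))" using \<gamma>_def \<eta>_def assoc'[of \<eta> q cQ] et dq dcq by simp
  also have "\<dots> = cQ \<cdot> (ide (cdm q) \<cdot> (q \<cdot> (\<sigma> \<cdot> u)))" using assoc_eq[OF s23, of "q \<cdot> (\<sigma> \<cdot> u)"] s21 s22 dq qsu by simp
  also have "\<dots> = \<gamma> \<cdot> (\<sigma> \<cdot> u)" using qsu \<gamma>_def assoc'[of "\<sigma> \<cdot> u" q cQ] su dq dcq by simp
  also have "\<dots> = v \<cdot> (c \<cdot> (\<sigma> \<cdot> u))" using v assoc'[of "\<sigma> \<cdot> u" c v] su dc by simp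
  also have "\<dots> = v \<cdot> (ide (cdm c) \<cdot> u)" using assoc_eq[OF sg3, of u] u sg1 sg2 cu by simp
  also have "\<dots> = ide (cdm \<gamma>)" using vu cu g1 by simp
  finally have ge: "\<gamma> \<cdot> \<eta> = ide (cdm \<gamma>)" .
  obtain \<kappa> where ka: "is_kernel C \<kappa> \<gamma>" using ex_ker by blast
  have ck: "cdm \<kappa> = M" using ker_cod[OF ka] g1 by simp
  have kam: "mono C \<kappa>" by (rule ker_mono[OF ka])
  obtain \<rho> where rho: "dm \<rho> = dm \<gamma>" "cdm \<rho> = dm \<kappa>" "\<rho> \<cdot> \<kappa> = ide (dm \<kappa>)"
    by (rule split_ker[OF _ _ ge ka]) (use et g1 in simp_all)
  have wk: "factors_through C w \<kappa>"
  proof -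
    have "\<gamma> \<cdot> w = cQ \<cdot> (q \<cdot> w)" using \<gamma>_def assoc'[of w q cQ] w1 dq dcq by simp
    hence z: "zm (\<gamma> \<cdot> w)" using coker_zero[OF cq] by simp
    have cw: "cdm w = dm \<gamma>" using w1 g1 by simp
    obtain y where "dm y = dm w" "cdm y = dm \<kappa>" "\<kappa> \<cdot> y = w" by (rule ker_facE[OF ka cw z])
    thus ?thesis by (rule ftI)
  qed
  have kk: "factors_through C k \<kappa>"
  proof -
    have "\<gamma> \<cdot> k = cQ \<cdot> (q \<cdot> k)" using \<gamma>_def assoc'[of k q cQ] k1 dq dcq by simp
    moreover have "zm (cQ \<cdot> (q \<cdot> k))" by (rule zm_compL[OF coker_zero[OF q]]) (use dcq k1 dq in simp)
    ultimately have z: "zm (\<gamma> \<cdot> k)" by simp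
    have cw: "cdm k = dm \<gamma>" using k1 g1 by simp
    obtain y where "dm y = dm k" "cdm y = dm \<kappa>" "\<kappa> \<cdot> y = k" by (rule ker_facE[OF ka cw z])
    thus ?thesis by (rule ftI)
  qed
  have "factors_through C s \<kappa>" by (rule univ[OF kam ck wk kk])
  then obtain a where a: "dm a = dm s" "cdm a = dm \<kappa>" "\<kappa> \<cdot> a = s" by (rule ftE)
  obtain \<zeta> where ze: "is_cokernel C \<zeta> s" using ex_coker by blast
  have dze: "dm \<zeta> = M" using coker_dom[OF ze] s1 by simp
  have kill_s: "zm (\<zeta> \<cdot> x)" if fx: "factors_through C x s" for x
  proof -
    obtain y where y: "dm y = dm x" "cdm y = dm s" "s \<cdot> y = x" using fx by (rule ftE)
    have "\<zeta> \<cdot> x = (\<zeta> \<cdot> s) \<cdot> y" using assoc[of y s \<zeta>] y dze s1 by simp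
    moreover have "zm ((\<zeta> \<cdot> s) \<cdot> y)" by (rule zm_compR[OF coker_zero[OF ze]]) (use y dze s1 in simp)
    ultimately show ?thesis by simp
  qed
  have qw: "is_kernel C \<kappa> (cQ \<cdot> q)" using ka \<gamma>_def by simp
  have "zm (\<zeta> \<cdot> \<kappa>)" by (rule kill[OF q cq qw]) (use w1 k1 dze kill_s ws ks in simp_all)
  moreover have "is_kernel C s \<zeta>" by (rule mono_is_ker_coker[OF sm ze])
  moreover have "cdm \<kappa> = dm \<zeta>" using ck dze by simp
  ultimately obtain b where b: "dm b = dm \<kappa>" "cdm b = dm s" "s \<cdot> b = \<kappa>" using ker_facE by metis
  have "s \<cdot> (b \<cdot> a) = \<kappa> \<cdot> a" using assoc[of a b s] a b by simp
  also have "\<dots> = s \<cdot> ide (dm s)" using a by simp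
  finally have ba: "b \<cdot> a = ide (dm s)" by (rule mono_cancel[OF sm]) (use a b in simp_all)
  have "(b \<cdot> \<rho>) \<cdot> s = b \<cdot> (\<rho> \<cdot> (\<kappa> \<cdot> a))" using assoc'[of s \<rho> b] a b rho ck s1 g1 by simp
  also have "\<dots> = b \<cdot> ((\<rho> \<cdot> \<kappa>) \<cdot> a)" using assoc[of a \<kappa> \<rho>] a rho ck g1 by simp
  also have "\<dots> = ide (dm s)" using rho a ba by simp
  finally show ?thesis by (intro secI[of "b \<cdot> \<rho>"]) (use b rho g1 s1 in simp_all)
qed


lemma inter_exists:
  assumes "finite I" shows "(\<forall>x\<in>I. mono C (ks x) \<and> cdm (ks x) = M) \<longrightarrow> (\<exists>j. is_intersection C M I ks j)"
  using assms
proof (induction I rule: finite_induct)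
  case empty
  have "is_intersection C M {} ks (ide M)" unfolding is_intersection_def
  proof (intro conjI allI impI ballI)
    show "mono C (ide M)" by (rule sect_mono[of "ide M"]) simp_all
    show "cdm (ide M) = M" by simp
    fix t assume "mono C t \<and> cdm t = M \<and> (\<forall>x\<in>{}. factors_through C t (ks x))"
    thus "factors_through C t (ide M)" by (intro ftI[of t]) simp_all
  qed simp
  thus ?case by blast
next
  case (insert a F)
  show ?case
  proof
    assume H: "\<forall>x\<in>insert a F. mono C (ks x) \<and> cdm (ks x) = M"
    then obtain j' where j': "is_intersection C M F ks j'" using insert.IH by blast
    have j'm: "mono C j'" and cj': "cdm j' = M" using j' unfolding is_intersection_def by auto
    obtain qa where qa: "is_cokernel C qa (ks a)" using ex_coker by blast
    have dqa: "dm qa = M" using coker_dom[OF qa] H by simp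
    obtain \<kappa> where ka: "is_kernel C \<kappa> (qa \<cdot> j')" using ex_ker by blast
    have ck: "cdm \<kappa> = dm j'" using ker_cod[OF ka] cj' dqa by simp
    have kam: "mono C \<kappa>" by (rule ker_mono[OF ka])
    have kq: "is_kernel C (ks a) qa" by (rule mono_is_ker_coker[OF _ qa]) (use H in simp)
    have "is_intersection C M (insert a F) ks (j' \<cdot> \<kappa>)" unfolding is_intersection_def
    proof (intro conjI allI impI ballI)
      show "mono C (j' \<cdot> \<kappa>)" by (rule mono_comp[OF j'm kam ck])
      show "cdm (j' \<cdot> \<kappa>) = M" using ck cj' by simp
    next
      fix x assume x: "x \<in> insert a F"
      show "factors_through C (j' \<cdot> \<kappa>) (ks x)"
      proof (cases "x = a")
        case True
        have "qa \<cdot> (j' \<cdot> \<kappa>) = (qa \<cdot> j') \<cdot> \<kappa>" by (rule assoc) (use ck cj' dqa in simp_all)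
        hence z: "zm (qa \<cdot> (j' \<cdot> \<kappa>))" using ker_zero[OF ka] by simp
        have c: "cdm (j' \<cdot> \<kappa>) = dm qa" using ck cj' dqa by simp
        obtain y where "dm y = dm (j' \<cdot> \<kappa>)" "cdm y = dm (ks a)" "ks a \<cdot> y = j' \<cdot> \<kappa>" by (rule ker_facE[OF kq c z])
        thus ?thesis using True by (intro ftI) simp_all
      next
        case False
        hence "x \<in> F" using x by simp
        hence "factors_through C j' (ks x)" using j' unfolding is_intersection_def by blast
        moreover have "factors_through C (j' \<cdot> \<kappa>) j'" by (rule ft_comp[OF ck])
        ultimately show ?thesis using ft_trans by blast
      qed
    next
      fix t assume t: "mono C t \<and> cdm t = M \<and> (\<forall>x\<in>insert a F. factors_through C t (ks x))"
      hence "factors_through C t j'" using j' unfolding is_intersection_def by auto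
      then obtain v where v: "dm v = dm t" "cdm v = dm j'" "j' \<cdot> v = t" by (rule ftE)
      obtain w where w: "dm w = dm t" "cdm w = dm (ks a)" "ks a \<cdot> w = t" using t by (meson insertI1 ftE)
      have "(qa \<cdot> j') \<cdot> v = qa \<cdot> t" using assoc'[of v j' qa] v cj' dqa by simp
      also have "\<dots> = (qa \<cdot> ks a) \<cdot> w" using assoc[of w "ks a" qa] w H dqa by simp
      finally have e: "(qa \<cdot> j') \<cdot> v = (qa \<cdot> ks a) \<cdot> w" .
      have "zm ((qa \<cdot> ks a) \<cdot> w)" by (rule zm_compR[OF coker_zero[OF qa]]) (use w H dqa in simp)
      hence z: "zm ((qa \<cdot> j') \<cdot> v)" using e by simp
      have c: "cdm v = dm (qa \<cdot> j')" using v cj' dqa by simp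
      obtain y where y: "dm y = dm v" "cdm y = dm \<kappa>" "\<kappa> \<cdot> y = v" by (rule ker_facE[OF ka c z])
      have "(j' \<cdot> \<kappa>) \<cdot> y = t" using assoc'[of y \<kappa> j'] y v ck by simp
      thus "factors_through C t (j' \<cdot> \<kappa>)" using y v ck by (intro ftI[of y]) simp_all
    qed
    thus "\<exists>j. is_intersection C M (insert a F) ks j" by blast
  qed
qed

lemma sum_exists:
  assumes "finite I" shows "(\<forall>x\<in>I. cdm (ks x) = M) \<longrightarrow> (\<exists>s. is_sum C M I ks s)"
  using assms
proof (induction I rule: finite_induct)
  case empty
  obtain z where z: "zero_obj C z" using ex_zero_obj by blast
  obtain o0 where o0: "dm o0 = z" "cdm o0 = M" using zero_obj_ex_out[OF z] by blast
  have "is_sum C M {} ks o0" unfolding is_sum_def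
  proof (intro conjI allI impI ballI)
    show "mono C o0" by (rule monoI) (rule zero_obj_in[OF z], use o0 in simp_all)
    show "cdm o0 = M" by (rule o0(2))
    fix t assume t: "mono C t \<and> cdm t = M \<and> (\<forall>x\<in>{}. factors_through C (ks x) t)"
    obtain u where u: "dm u = z" "cdm u = dm t" using zero_obj_ex_out[OF z] by blast
    have "t \<cdot> u = o0" by (rule zero_obj_out[OF z]) (use u o0 t in simp_all)
    thus "factors_through C o0 t" using u o0 by (intro ftI[of u]) simp_all
  qed simp
  thus ?case by blast
next
  case (insert a F)
  show ?case
  proof
    assume H: "\<forall>x\<in>insert a F. cdm (ks x) = M"
    then obtain s' where s': "is_sum C M F ks s'" using insert.IH by blast
    have cs': "cdm s' = M" using s' unfolding is_sum_def by auto
    obtain q where q: "is_cokernel C q s'" using ex_coker by blast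
    have dq: "dm q = M" using coker_dom[OF q] cs' by simp
    obtain cQ where cq: "is_cokernel C cQ (q \<cdot> ks a)" using ex_coker by blast
    have dcq: "dm cQ = cdm q" using coker_dom[OF cq] H dq by simp
    obtain \<kappa> where ka: "is_kernel C \<kappa> (cQ \<cdot> q)" using ex_ker by blast
    have ck: "cdm \<kappa> = M" using ker_cod[OF ka] dcq dq by simp
    have kf: "factors_through C x \<kappa>" if x1: "cdm x = M" and x2: "zm ((cQ \<cdot> q) \<cdot> x)" for x
    proof -
      have c: "cdm x = dm (cQ \<cdot> q)" using x1 dcq dq by simp
      obtain y where "dm y = dm x" "cdm y = dm \<kappa>" "\<kappa> \<cdot> y = x" by (rule ker_facE[OF ka c x2])
      thus ?thesis by (rule ftI)
    qed
    have "is_sum C M (insert a F) ks \<kappa>" unfolding is_sum_def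
    proof (intro conjI allI impI ballI)
      show "mono C \<kappa>" by (rule ker_mono[OF ka])
      show "cdm \<kappa> = M" by (rule ck)
    next
      fix x assume x: "x \<in> insert a F"
      show "factors_through C (ks x) \<kappa>"
      proof (cases "x = a")
        case True
        have "(cQ \<cdot> q) \<cdot> ks a = cQ \<cdot> (q \<cdot> ks a)" by (rule assoc') (use H dq dcq in simp_all)
        hence "zm ((cQ \<cdot> q) \<cdot> ks a)" using coker_zero[OF cq] by simp
        thus ?thesis using kf[of "ks a"] H True by simp
      next
        case False
        hence "x \<in> F" using x by simp
        hence "factors_through C (ks x) s'" using s' unfolding is_sum_def by blast
        moreover have "factors_through C s' \<kappa>"
        proof -
          have "(cQ \<cdot> q) \<cdot> s' = cQ \<cdot> (q \<cdot> s')" by (rule assoc') (use cs' dq dcq in simp_all)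
          moreover have "zm (cQ \<cdot> (q \<cdot> s'))" by (rule zm_compL[OF coker_zero[OF q]]) (use dcq cs' dq in simp)
          ultimately have "zm ((cQ \<cdot> q) \<cdot> s')" by simp
          thus ?thesis using kf[of s'] cs' by simp
        qed
        ultimately show ?thesis using ft_trans by blast
      qed
    next
      fix m assume m: "mono C m \<and> cdm m = M \<and> (\<forall>x\<in>insert a F. factors_through C (ks x) m)"
      have "factors_through C s' m" using s' m unfolding is_sum_def by auto
      obtain \<zeta> where ze: "is_cokernel C \<zeta> m" using ex_coker by blast
      have dze: "dm \<zeta> = M" using coker_dom[OF ze] m by simp
      have kill_m: "zm (\<zeta> \<cdot> x)" if fx: "factors_through C x m" for x
      proof -
        obtain y where y: "dm y = dm x" "cdm y = dm m" "m \<cdot> y = x" using fx by (rule ftE)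
        have "\<zeta> \<cdot> x = (\<zeta> \<cdot> m) \<cdot> y" using assoc[of y m \<zeta>] y dze m by simp
        moreover have "zm ((\<zeta> \<cdot> m) \<cdot> y)" by (rule zm_compR[OF coker_zero[OF ze]]) (use y dze m in simp)
        ultimately show ?thesis by simp
      qed
      have "zm (\<zeta> \<cdot> \<kappa>)" by (rule kill[OF q cq ka]) (use H cs' dze kill_m \<open>factors_through C s' m\<close> m in simp_all)
      moreover have "is_kernel C m \<zeta>" by (rule mono_is_ker_coker[OF _ ze]) (use m in simp)
      moreover have c: "cdm \<kappa> = dm \<zeta>" using ck dze by simp
      ultimately obtain y where "dm y = dm \<kappa>" "cdm y = dm m" "m \<cdot> y = \<kappa>" using ker_facE by metis
      thus "factors_through C \<kappa> m" by (rule ftI)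
    qed
    thus "\<exists>s. is_sum C M (insert a F) ks s" by blast
  qed
qed

lemma FI_inter:
  assumes J: "is_intersection C M I ks j" and H: "\<forall>x\<in>I. mono C (ks x) \<and> fully_invariant C (ks x)"
  shows "fully_invariant C j"
  unfolding fully_invariant_def
proof (intro conjI allI impI)
  show jm: "mono C j" using J unfolding is_intersection_def by auto
  have cj: "cdm j = M" using J unfolding is_intersection_def by auto
  fix h assume "hom C (cdm j) (cdm j) h"
  hence h: "dm h = M" "cdm h = M" using cj unfolding hom_def by auto
  have "\<forall>x\<in>I. factors_through C (h \<cdot> j) (ks x)"
  proof
    fix x assume x: "x \<in> I"
    have "factors_through C j (ks x)" using J x unfolding is_intersection_def by auto
    then obtain u where u: "dm u = dm j" "cdm u = dm (ks x)" "ks x \<cdot> u = j" "cdm j = cdm (ks x)" by (rule ftE)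
    have "hom C (cdm (ks x)) (cdm (ks x)) h" using h u cj unfolding hom_def by simp
    then obtain \<alpha> where al: "hom C (dm (ks x)) (dm (ks x)) \<alpha>" "h \<cdot> ks x = ks x \<cdot> \<alpha>"
      using H x unfolding fully_invariant_def by blast
    have al2: "dm \<alpha> = dm (ks x)" "cdm \<alpha> = dm (ks x)" using al unfolding hom_def by auto
    have "h \<cdot> j = (h \<cdot> ks x) \<cdot> u" using assoc[of u "ks x" h] u h cj by simp
    also have "\<dots> = ks x \<cdot> (\<alpha> \<cdot> u)" using al(2) assoc'[of u \<alpha> "ks x"] al2 u by simp
    finally show "factors_through C (h \<cdot> j) (ks x)" using al2 u h cj by (intro ftI[of "\<alpha> \<cdot> u"]) simp_all
  qed
  moreover have "\<forall>x\<in>I. mono C (ks x)" using H by blast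
  moreover have "cdm (h \<cdot> j) = M" using h cj by simp
  ultimately have "factors_through C (h \<cdot> j) j" using inter_univ[OF J] by blast
  then obtain \<alpha> where "dm \<alpha> = dm (h \<cdot> j)" "cdm \<alpha> = dm j" "j \<cdot> \<alpha> = h \<cdot> j" by (rule ftE)
  thus "\<exists>\<alpha>. hom C (dm j) (dm j) \<alpha> \<and> h \<cdot> j = j \<cdot> \<alpha>" using h cj unfolding hom_def by (intro exI[of _ \<alpha>]) simp
qed

lemma FI_sum:
  assumes S: "is_sum C M I ks s" and H: "\<forall>x\<in>I. fully_invariant C (ks x)"
  shows "fully_invariant C s"
  unfolding fully_invariant_def
proof (intro conjI allI impI)
  show sm: "mono C s" using S unfolding is_sum_def by auto
  have cs: "cdm s = M" using S unfolding is_sum_def by auto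
  fix h assume "hom C (cdm s) (cdm s) h"
  hence h: "dm h = M" "cdm h = M" using cs unfolding hom_def by auto
  obtain \<zeta> where ze: "is_cokernel C \<zeta> s" using ex_coker by blast
  have dze: "dm \<zeta> = M" using coker_dom[OF ze] cs by simp
  have "\<forall>x\<in>I. zm ((\<zeta> \<cdot> h) \<cdot> ks x)"
  proof
    fix x assume x: "x \<in> I"
    have "factors_through C (ks x) s" using S x unfolding is_sum_def by auto
    then obtain v where v: "dm v = dm (ks x)" "cdm v = dm s" "s \<cdot> v = ks x" "cdm (ks x) = cdm s" by (rule ftE)
    have "hom C (cdm (ks x)) (cdm (ks x)) h" using h v cs unfolding hom_def by simp
    then obtain \<alpha> where al: "hom C (dm (ks x)) (dm (ks x)) \<alpha>" "h \<cdot> ks x = ks x \<cdot> \<alpha>"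
      using H x unfolding fully_invariant_def by blast
    have al2: "dm \<alpha> = dm (ks x)" "cdm \<alpha> = dm (ks x)" using al unfolding hom_def by auto
    have "(\<zeta> \<cdot> h) \<cdot> ks x = \<zeta> \<cdot> (ks x \<cdot> \<alpha>)" using assoc'[of "ks x" h \<zeta>] al(2) h dze v cs by simp
    also have "\<dots> = (\<zeta> \<cdot> s) \<cdot> (v \<cdot> \<alpha>)" using v assoc'[of \<alpha> v s] assoc[of "v \<cdot> \<alpha>" s \<zeta>] al2 dze cs by simp
    finally show "zm ((\<zeta> \<cdot> h) \<cdot> ks x)" using zm_compR[OF coker_zero[OF ze], of "v \<cdot> \<alpha>"] al2 v dze cs by simp
  qed
  hence "zm ((\<zeta> \<cdot> h) \<cdot> s)" using sum_univ[OF S] h dze by simp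
  hence z: "zm (\<zeta> \<cdot> (h \<cdot> s))" using assoc'[of s h \<zeta>] h dze cs by simp
  have c: "cdm (h \<cdot> s) = dm \<zeta>" using h cs dze by simp
  obtain \<alpha> where "dm \<alpha> = dm (h \<cdot> s)" "cdm \<alpha> = dm s" "s \<cdot> \<alpha> = h \<cdot> s"
    by (rule ker_facE[OF mono_is_ker_coker[OF sm ze] c z])
  thus "\<exists>\<alpha>. hom C (dm s) (dm s) \<alpha> \<and> h \<cdot> s = s \<cdot> \<alpha>" using h cs unfolding hom_def by (intro exI[of _ \<alpha>]) simp
qed

lemma coker_epi_precomp:
  assumes c: "is_cokernel C c (f \<cdot> e)" and ep: "epi C e" and ce: "cdm e = dm f"
  shows "is_cokernel C c f"
proof -
  have all: "\<forall>g. dm g = cdm (f \<cdot> e) \<and> zm (g \<cdot> (f \<cdot> e)) \<longrightarrow> (\<exists>!u. hom C (cdm c) (cdm g) u \<and> u \<cdot> c = g)"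
    using c unfolding is_cokernel_def by blast
  have dc: "dm c = cdm f" using coker_dom[OF c] ce by simp
  show ?thesis unfolding is_cokernel_def
  proof (intro conjI allI impI)
    show "dm c = cdm f" by (rule dc)
    have "zm ((c \<cdot> f) \<cdot> e)" using coker_zero[OF c] assoc[of e f c] ce dc by simp
    thus "zm (c \<cdot> f)" by (rule zm_epi[OF ep]) (use ce dc in simp)
    fix g assume g: "dm g = cdm f \<and> zm (g \<cdot> f)"
    have "zm (g \<cdot> (f \<cdot> e))" using zm_compR[of "g \<cdot> f" e] assoc[of e f g] g ce by simp
    moreover have "dm g = cdm (f \<cdot> e)" using g ce by simp
    ultimately show "\<exists>!u. hom C (cdm c) (cdm g) u \<and> u \<cdot> c = g" using all by blast
  qed
qed


lemma p1ii:
  assumes sp: "self_F_split b C i d" and ki: "is_kernel C i d" and im: "mono C i" and fin: "finite I"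
  shows "(\<forall>x\<in>I. is_section C (ks x) \<and> cdm (ks x) = cdm i \<and> factors_through C i (ks x)) \<longrightarrow>
     (\<forall>j. is_intersection C (cdm i) I ks j \<longrightarrow> is_section C j)"
  using fin
proof (induction I rule: finite_induct)
  case empty
  show ?case
  proof (intro impI allI)
    fix j assume j: "is_intersection C (cdm i) {} ks j"
    have jm: "mono C j" and cj: "cdm j = cdm i" using j unfolding is_intersection_def by auto
    have "mono C (ide (cdm i))" by (rule sect_mono[of "ide (cdm i)"]) simp_all
    hence "factors_through C (ide (cdm i)) j" using j unfolding is_intersection_def by auto
    then obtain u where u: "dm u = cdm i" "cdm u = dm j" "j \<cdot> u = ide (cdm i)" by (rule ftE) simp_all
    have "j \<cdot> (u \<cdot> j) = j \<cdot> ide (dm j)" using assoc[of j u j] u cj by simp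
    hence "u \<cdot> j = ide (dm j)" by (rule mono_cancel[OF jm]) (use u cj in simp_all)
    thus "is_section C j" using u cj by (intro secI[of u]) simp_all
  qed
next
  case (insert a F)
  show ?case
  proof (intro impI allI)
    fix j assume H: "\<forall>x\<in>insert a F. is_section C (ks x) \<and> cdm (ks x) = cdm i \<and> factors_through C i (ks x)"
      and j: "is_intersection C (cdm i) (insert a F) ks j"
    have mo: "\<forall>x\<in>insert a F. mono C (ks x)" using H sec_mono by blast
    have "\<exists>j'. is_intersection C (cdm i) F ks j'" using inter_exists[OF insert.hyps(1), of ks "cdm i"] H sec_mono by blast
    then obtain j' where j': "is_intersection C (cdm i) F ks j'" by blast
    have sj': "is_section C j'" using insert.IH H j' by blast
    have cj': "cdm j' = cdm i" using j' unfolding is_intersection_def by auto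
    have ij': "factors_through C i j'" using j' im H unfolding is_intersection_def by auto
    obtain t1 where t1: "dm t1 = cdm j'" "cdm t1 = dm j'" "t1 \<cdot> j' = ide (dm j')" using sj' by (rule secE)
    obtain t2 where t2: "dm t2 = cdm (ks a)" "cdm t2 = dm (ks a)" "t2 \<cdot> ks a = ide (dm (ks a))"
      using H by (meson insertI1 secE)
    have jm: "mono C j" and cj: "cdm j = cdm i" using j unfolding is_intersection_def by auto
    have jall: "\<forall>x\<in>insert a F. factors_through C j (ks x)" using j unfolding is_intersection_def by auto
    have jj': "factors_through C j j'" by (rule inter_univ[OF j']) (use mo cj jall in auto)
    show "is_section C j"
    proof (rule bin1[OF sp ki im cj' _ t1(2,3) _ _ t2(2,3) _ jm cj jj'])
      show "dm t1 = cdm i" "cdm (ks a) = cdm i" "dm t2 = cdm i" using t1 t2 cj' H by simp_all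
      show "factors_through C i (ks a)" using H by simp
      show "factors_through C j (ks a)" using jall by simp
      fix \<tau> assume t: "cdm \<tau> = cdm i" "factors_through C \<tau> j'" "factors_through C \<tau> (ks a)"
      have "\<forall>x\<in>insert a F. factors_through C \<tau> (ks x)"
      proof
        fix x assume "x \<in> insert a F"
        moreover have "x \<in> F \<Longrightarrow> factors_through C \<tau> (ks x)"
          using ft_trans[OF t(2)] j' unfolding is_intersection_def by blast
        ultimately show "factors_through C \<tau> (ks x)" using t by auto
      qed
      thus "factors_through C \<tau> j" by (rule inter_univ[OF j mo t(1)])
    qed
  qed
qed

lemma p2ii:
  assumes dsp: "dual_self_F_split b C i d" and ki: "is_kernel C i d" and im: "mono C i" and fin: "finite I"
  shows "(\<forall>x\<in>I. is_section C (ks x) \<and> cdm (ks x) = cdm i \<and> factors_through C (ks x) i) \<longrightarrow>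
     (\<forall>s. is_sum C (cdm i) I ks s \<longrightarrow> is_section C s)"
  using fin
proof (induction I rule: finite_induct)
  case empty
  show ?case
  proof (intro impI allI)
    fix s assume S: "is_sum C (cdm i) {} ks s"
    have sm: "mono C s" and cs: "cdm s = cdm i" using S unfolding is_sum_def by auto
    obtain z where z: "zero_obj C z" using ex_zero_obj by blast
    obtain o0 where o0: "dm o0 = z" "cdm o0 = cdm i" using zero_obj_ex_out[OF z] by blast
    have om: "mono C o0" by (rule monoI) (rule zero_obj_in[OF z], use o0 in simp_all)
    have "factors_through C s o0" using S om o0 unfolding is_sum_def by auto
    then obtain u where u: "dm u = dm s" "cdm u = z" "o0 \<cdot> u = s" using o0 by (metis ftE)
    obtain w where w: "dm w = cdm i" "cdm w = z" using zero_obj_ex_in[OF z] by blast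
    obtain v where v: "dm v = z" "cdm v = dm s" using zero_obj_ex_out[OF z] by blast
    define r where "r = v \<cdot> w"
    have r: "dm r = cdm s" "cdm r = dm s" using r_def v w cs by simp_all
    have "u \<cdot> (r \<cdot> s) = u" by (rule zero_obj_in[OF z]) (use u r in simp_all)
    hence "s \<cdot> (r \<cdot> s) = s" using u assoc'[of "r \<cdot> s" u o0] r o0 by simp
    hence "s \<cdot> (r \<cdot> s) = s \<cdot> ide (dm s)" by simp
    hence "r \<cdot> s = ide (dm s)" by (rule mono_cancel[OF sm]) (use r in simp_all)
    thus "is_section C s" using r by (intro secI[of r]) simp_all
  qed
next
  case (insert a F)
  show ?case
  proof (intro impI allI)
    fix s assume H: "\<forall>x\<in>insert a F. is_section C (ks x) \<and> cdm (ks x) = cdm i \<and> factors_through C (ks x) i"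
      and S: "is_sum C (cdm i) (insert a F) ks s"
    have cdi: "cdm i = dm d" using ker_cod[OF ki] .
    have "\<exists>s'. is_sum C (cdm i) F ks s'" using sum_exists[OF insert.hyps(1), of ks "cdm i"] H by blast
    then obtain s' where s': "is_sum C (cdm i) F ks s'" by blast
    have ss': "is_section C s'" using insert.IH H s' by blast
    have cs': "cdm s' = cdm i" using s' unfolding is_sum_def by auto
    obtain t where t: "dm t = cdm s'" "cdm t = dm s'" "t \<cdot> s' = ide (dm s')" using ss' by (rule secE)
    define w where "w = ks a"
    have wi: "factors_through C w i" and cw: "cdm w = cdm i" and sw: "is_section C w" using H w_def by auto
    obtain ta where ta: "dm ta = cdm w" "cdm ta = dm w" "ta \<cdot> w = ide (dm w)" using sw by (rule secE)
    obtain a' where a': "dm a' = dm w" "cdm a' = dm i" "i \<cdot> a' = w" using wi by (rule ftE)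
    obtain q where q: "is_cokernel C q s'" using ex_coker by blast
    have dq: "dm q = cdm i" using coker_dom[OF q] cs' by simp
    obtain s2 where s2: "dm s2 = cdm q" "cdm s2 = cdm s'" "q \<cdot> s2 = ide (cdm q)" "zm (t \<cdot> s2)"
      by (rule split_coker[OF t q])
    define g where "g = s2 \<cdot> (q \<cdot> (w \<cdot> ta))"
    have g: "dm g = cdm i" "cdm g = cdm i" using g_def s2 ta dq cw cs' by simp_all
    obtain c0 where c0: "is_cokernel C c0 (g \<cdot> i)" using ex_coker by blast
    have "hom C (cdm i) (cdm i) g \<and> is_cokernel C c0 (g \<cdot> i)" using g c0 unfolding hom_def by simp
    hence "is_retraction C c0" using dsp unfolding dual_self_F_split_def by blast
    then obtain \<sigma> where sg: "dm \<sigma> = cdm c0" "cdm \<sigma> = dm c0" "c0 \<cdot> \<sigma> = ide (cdm c0)" by (rule retrE)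
    define \<epsilon> where "\<epsilon> = ta \<cdot> i"
    have ep1: "dm \<epsilon> = dm i" "cdm \<epsilon> = dm w" using \<epsilon>_def ta cw by simp_all
    have "\<epsilon> \<cdot> a' = ta \<cdot> w" using \<epsilon>_def assoc'[of a' i ta] a' ta cw by simp
    hence epi_e: "epi C \<epsilon>" using ta a' ep1 by (intro retr_epi[of \<epsilon> a']) simp_all
    have "g \<cdot> i = (s2 \<cdot> (q \<cdot> w)) \<cdot> \<epsilon>"
      using g_def \<epsilon>_def ta cw dq s2 cs' by (simp add: assoc')
    hence c1: "is_cokernel C c0 ((s2 \<cdot> (q \<cdot> w)) \<cdot> \<epsilon>)" using c0 by simp
    have c2: "is_cokernel C c0 (s2 \<cdot> (q \<cdot> w))" by (rule coker_epi_precomp[OF c1 epi_e]) (use ep1 cw dq s2 in simp)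
    have sm: "mono C s" and cs: "cdm s = cdm i" using S unfolding is_sum_def by auto
    have sall: "\<forall>x\<in>insert a F. factors_through C (ks x) s" using S unfolding is_sum_def by auto
    have s's: "factors_through C s' s" using s' sm cs sall unfolding is_sum_def by auto
    show "is_section C s"
    proof (rule bin2[OF cs' _ t(2,3) cw q s2(1) _ s2(3) c2 sg sm cs])
      show "dm t = cdm i" using t cs' by simp
      show "cdm s2 = cdm i" using s2 cs' by simp
      show "factors_through C w s" using sall w_def by simp
      show "factors_through C s' s" by (rule s's)
      fix m assume m: "mono C m" "cdm m = cdm i" "factors_through C w m" "factors_through C s' m"
      have "\<forall>x\<in>insert a F. factors_through C (ks x) m"
      proof
        fix x assume "x \<in> insert a F"
        moreover have "x \<in> F \<Longrightarrow> factors_through C (ks x) m"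
          using ft_trans[OF _ m(4)] s' unfolding is_sum_def by blast
        ultimately show "factors_through C (ks x) m" using m w_def by auto
      qed
      thus "factors_through C s m" using S m unfolding is_sum_def by auto
    qed
  qed
qed


lemma main:
  assumes se: "short_exact C i d" and fi: "fully_invariant C i"
  shows "\<forall>b::bool.
     (self_F_split b C i d \<longrightarrow>
        (\<forall>k j. direct_summand b C (Cod C i) k
              \<and> is_intersection C (Cod C i) {0::nat, 1} (\<lambda>x. if x = 0 then i else k) j
              \<longrightarrow> direct_summand b C (Cod C i) j)
      \<and> (\<forall>(I::nat set) ks j. finite I
              \<and> (\<forall>x\<in>I. direct_summand b C (Cod C i) (ks x) \<and> factors_through C i (ks x))
              \<and> is_intersection C (Cod C i) I ks j
              \<longrightarrow> direct_summand b C (Cod C i) j \<and> factors_through C i j))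
   \<and> (dual_self_F_split b C i d \<longrightarrow>
        (\<forall>k s. direct_summand b C (Cod C i) k
              \<and> is_sum C (Cod C i) {0::nat, 1} (\<lambda>x. if x = 0 then i else k) s
              \<longrightarrow> direct_summand b C (Cod C i) s)
      \<and> (\<forall>(I::nat set) ks s. finite I
              \<and> (\<forall>x\<in>I. direct_summand b C (Cod C i) (ks x) \<and> factors_through C (ks x) i)
              \<and> is_sum C (Cod C i) I ks s
              \<longrightarrow> direct_summand b C (Cod C i) s \<and> factors_through C s i))"
proof (rule allI, rule conjI, rule_tac [!] impI, rule_tac [!] conjI)
  fix b :: bool
  have ki: "is_kernel C i d" and im: "mono C i" using se unfolding short_exact_def by auto
  have cdi: "cdm i = dm d" using ker_cod[OF ki] .
  {
    assume sp: "self_F_split b C i d"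
    show "\<forall>k j. direct_summand b C (Cod C i) k
              \<and> is_intersection C (Cod C i) {0::nat, 1} (\<lambda>x. if x = 0 then i else k) j
              \<longrightarrow> direct_summand b C (Cod C i) j"
    proof (intro allI impI, elim conjE)
      fix k j assume K: "direct_summand b C (Cod C i) k"
        and J: "is_intersection C (Cod C i) {0::nat, 1} (\<lambda>x. if x = 0 then i else k) j"
      have ck: "cdm k = cdm i" and sk: "is_section C k" and fk: "b \<longrightarrow> fully_invariant C k"
        using K unfolding direct_summand_def by auto
      obtain t where t: "dm t = cdm k" "cdm t = dm k" "t \<cdot> k = ide (dm k)" using sk by (rule secE)
      have mo: "\<forall>x\<in>{0::nat,1}. mono C (if x = 0 then i else k)" using im sec_mono[OF sk] by auto
      have jm: "mono C j" and cj: "cdm j = cdm i" using J unfolding is_intersection_def by auto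
      have ji: "factors_through C j i" and jk: "factors_through C j k"
        using J unfolding is_intersection_def by (auto dest: bspec[of _ _ 0] bspec[of _ _ 1])
      have "is_section C j"
      proof (rule part1i[OF sp ki im ck _ t(2,3) jm cj ji jk])
        show "dm t = cdm i" using t ck by simp
        fix \<tau> assume "cdm \<tau> = cdm i" "factors_through C \<tau> i" "factors_through C \<tau> k"
        thus "factors_through C \<tau> j" using inter_univ[OF J mo] by auto
      qed
      moreover have "b \<longrightarrow> fully_invariant C j"
      proof
        assume b
        have "\<forall>x\<in>{0::nat,1}. mono C (if x = 0 then i else k) \<and> fully_invariant C (if x = 0 then i else k)"
          using mo fi fk \<open>b\<close> by auto
        thus "fully_invariant C j" by (rule FI_inter[OF J])
      qed
      ultimately show "direct_summand b C (Cod C i) j" using cj unfolding direct_summand_def by simp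
    qed
    show "\<forall>(I::nat set) ks j. finite I
              \<and> (\<forall>x\<in>I. direct_summand b C (Cod C i) (ks x) \<and> factors_through C i (ks x))
              \<and> is_intersection C (Cod C i) I ks j
              \<longrightarrow> direct_summand b C (Cod C i) j \<and> factors_through C i j"
    proof (intro allI impI, elim conjE)
      fix I :: "nat set" and ks j assume fin: "finite I"
        and H: "\<forall>x\<in>I. direct_summand b C (Cod C i) (ks x) \<and> factors_through C i (ks x)"
        and J: "is_intersection C (Cod C i) I ks j"
      have H2: "\<forall>x\<in>I. is_section C (ks x) \<and> cdm (ks x) = cdm i \<and> factors_through C i (ks x)"
        using H unfolding direct_summand_def by auto
      have sj: "is_section C j" using p1ii[OF sp ki im fin] H2 J by blast
      have cj: "cdm j = cdm i" using J unfolding is_intersection_def by auto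
      have fj: "b \<longrightarrow> fully_invariant C j"
      proof
        assume b
        have "\<forall>x\<in>I. mono C (ks x) \<and> fully_invariant C (ks x)"
          using H \<open>b\<close> sec_mono unfolding direct_summand_def by blast
        thus "fully_invariant C j" by (rule FI_inter[OF J])
      qed
      have "factors_through C i j" using J im H unfolding is_intersection_def by auto
      thus "direct_summand b C (Cod C i) j \<and> factors_through C i j"
        using sj cj fj unfolding direct_summand_def by simp
    qed
  }
  {
    assume dsp: "dual_self_F_split b C i d"
    show "\<forall>k s. direct_summand b C (Cod C i) k
              \<and> is_sum C (Cod C i) {0::nat, 1} (\<lambda>x. if x = 0 then i else k) s
              \<longrightarrow> direct_summand b C (Cod C i) s"
    proof (intro allI impI, elim conjE)
      fix k s assume K: "direct_summand b C (Cod C i) k"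
        and S: "is_sum C (Cod C i) {0::nat, 1} (\<lambda>x. if x = 0 then i else k) s"
      have ck: "cdm k = cdm i" and sk: "is_section C k" and fk: "b \<longrightarrow> fully_invariant C k"
        using K unfolding direct_summand_def by auto
      obtain t where t: "dm t = cdm k" "cdm t = dm k" "t \<cdot> k = ide (dm k)" using sk by (rule secE)
      obtain q where q: "is_cokernel C q k" using ex_coker by blast
      have dq: "dm q = cdm i" using coker_dom[OF q] ck by simp
      obtain s2 where s2: "dm s2 = cdm q" "cdm s2 = cdm k" "q \<cdot> s2 = ide (cdm q)" "zm (t \<cdot> s2)"
        by (rule split_coker[OF t q])
      define g where "g = s2 \<cdot> q"
      have g: "dm g = cdm i" "cdm g = cdm i" using g_def s2 dq ck by simp_all
      obtain c0 where c0: "is_cokernel C c0 (g \<cdot> i)" using ex_coker by blast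
      have "hom C (cdm i) (cdm i) g \<and> is_cokernel C c0 (g \<cdot> i)" using g c0 unfolding hom_def by simp
      hence "is_retraction C c0" using dsp unfolding dual_self_F_split_def by blast
      then obtain \<sigma> where sg: "dm \<sigma> = cdm c0" "cdm \<sigma> = dm c0" "c0 \<cdot> \<sigma> = ide (cdm c0)" by (rule retrE)
      have "g \<cdot> i = s2 \<cdot> (q \<cdot> i)" using g_def assoc'[of i q s2] s2 dq by simp
      hence c2: "is_cokernel C c0 (s2 \<cdot> (q \<cdot> i))" using c0 by simp
      have sm: "mono C s" and cs: "cdm s = cdm i" using S unfolding is_sum_def by auto
      have is_: "factors_through C i s" and ks: "factors_through C k s"
        using S unfolding is_sum_def by (auto dest: bspec[of _ _ 0] bspec[of _ _ 1])
      have "is_section C s"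
      proof (rule bin2[OF ck _ t(2,3) refl q s2(1) _ s2(3) c2 sg sm cs is_ ks])
        show "dm t = cdm i" "cdm s2 = cdm i" using t s2 ck by simp_all
        fix m assume m: "mono C m" "cdm m = cdm i" "factors_through C i m" "factors_through C k m"
        hence "\<forall>x\<in>{0::nat,1}. factors_through C (if x = 0 then i else k) m" by auto
        thus "factors_through C s m" using S m unfolding is_sum_def by auto
      qed
      moreover have "b \<longrightarrow> fully_invariant C s"
      proof
        assume b
        have "\<forall>x\<in>{0::nat,1}. fully_invariant C (if x = 0 then i else k)" using fi fk \<open>b\<close> by auto
        thus "fully_invariant C s" by (rule FI_sum[OF S])
      qed
      ultimately show "direct_summand b C (Cod C i) s" using cs unfolding direct_summand_def by simp
    qed
    show "\<forall>(I::nat set) ks s. finite I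
              \<and> (\<forall>x\<in>I. direct_summand b C (Cod C i) (ks x) \<and> factors_through C (ks x) i)
              \<and> is_sum C (Cod C i) I ks s
              \<longrightarrow> direct_summand b C (Cod C i) s \<and> factors_through C s i"
    proof (intro allI impI, elim conjE)
      fix I :: "nat set" and ks s assume fin: "finite I"
        and H: "\<forall>x\<in>I. direct_summand b C (Cod C i) (ks x) \<and> factors_through C (ks x) i"
        and S: "is_sum C (Cod C i) I ks s"
      have H2: "\<forall>x\<in>I. is_section C (ks x) \<and> cdm (ks x) = cdm i \<and> factors_through C (ks x) i"
        using H unfolding direct_summand_def by auto
      have ss: "is_section C s" using p2ii[OF dsp ki im fin] H2 S by blast
      have cs: "cdm s = cdm i" using S unfolding is_sum_def by auto
      have fs: "b \<longrightarrow> fully_invariant C s"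
      proof
        assume b
        have "\<forall>x\<in>I. fully_invariant C (ks x)" using H \<open>b\<close> unfolding direct_summand_def by blast
        thus "fully_invariant C s" by (rule FI_sum[OF S])
      qed
      have "factors_through C s i" using S im H unfolding is_sum_def by auto
      thus "direct_summand b C (Cod C i) s \<and> factors_through C s i"
        using ss cs fs unfolding direct_summand_def by simp
    qed
  }
qed

end

theorem corollary3p7:
  fixes C :: "('o, 'm) cat" and i d :: 'm
  assumes "abelian_cat C"
    and "short_exact C i d"
    and "fully_invariant C i"
  shows "\<forall>b::bool.
     (self_F_split b C i d \<longrightarrow>
        (\<forall>k j. direct_summand b C (Cod C i) k
              \<and> is_intersection C (Cod C i) {0::nat, 1} (\<lambda>x. if x = 0 then i else k) j
              \<longrightarrow> direct_summand b C (Cod C i) j)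
      \<and> (\<forall>(I::nat set) ks j. finite I
              \<and> (\<forall>x\<in>I. direct_summand b C (Cod C i) (ks x) \<and> factors_through C i (ks x))
              \<and> is_intersection C (Cod C i) I ks j
              \<longrightarrow> direct_summand b C (Cod C i) j \<and> factors_through C i j))
   \<and> (dual_self_F_split b C i d \<longrightarrow>
        (\<forall>k s. direct_summand b C (Cod C i) k
              \<and> is_sum C (Cod C i) {0::nat, 1} (\<lambda>x. if x = 0 then i else k) s
              \<longrightarrow> direct_summand b C (Cod C i) s)
      \<and> (\<forall>(I::nat set) ks s. finite I
              \<and> (\<forall>x\<in>I. direct_summand b C (Cod C i) (ks x) \<and> factors_through C (ks x) i)
              \<and> is_sum C (Cod C i) I ks s
              \<longrightarrow> direct_summand b C (Cod C i) s \<and> factors_through C s i))"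
proof -
  interpret ab C by unfold_locales (rule assms(1))
  show ?thesis by (rule main[OF assms(2,3)])
qed

end
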